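(* Let $s\in\mathbb N$, $f\in C^\infty([0,1]^s)$, and let $A_s,B_s>0$, $c_s$ and $N_m$ be as in the context. For $m\in\mathbb N$ let $$\mathrm{SUM}_{1,m}=\sum_{\boldsymbol k\in Q_{N_m}}Z(\boldsymbol k)S(\boldsymbol k)\hat f(\boldsymbol k),\qquad \mathrm{SUM}'_{1,m}=\sum_{\boldsymbol k\in Q_{N_m}}Z(\boldsymbol k)S'(\boldsymbol k)\hat f(\boldsymbol k),$$ where the $S'(\boldsymbol k)$ are i.i.d. uniform on $\{-1,1\}$ and independent of everything else. Under the complete random design there exist constants $d_s$ and $\underline m_s$ depending on $s$ such that for all $m\ge\underline m_s$, $$d_{TV}(\mathrm{SUM}_{1,m},\mathrm{SUM}'_{1,m})\le\frac1{c_sm}+m^{d_s}2^{-4c_sm}.$$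
   Context: Binary digits: for $k\in\mathbb N_0$, $k=\sum_{\ell\ge1}a_\ell2^{\ell-1}$, $\vec k=(a_1,a_2,\dots)$, $\kappa=\{\ell:a_\ell=1\}$; for $x\in[0,1)$, $\vec x$ its binary digits. For $\boldsymbol k\in\mathbb N_0^s$ with digit sets $\boldsymbol\kappa=(\kappa_1,\dots,\kappa_s)$, $\|\boldsymbol\kappa\|_1=\sum_j\sum_{\ell\in\kappa_j}\ell$; $\mathbb N_*^s=\mathbb N_0^s\setminus\{\boldsymbol0\}$, $Q_N=\{\boldsymbol k\in\mathbb N_*^s:\|\boldsymbol\kappa\|_1\le N\}$; $\hat f(\boldsymbol k)=\int f(\boldsymbol x)(-1)^{\sum_j\vec k_j^{\mathsf T}\vec x_j}\mathrm d\boldsymbol x$. $\oplus$ on $\mathbb N_0^s$ is componentwise bitwise XOR. $\lambda=3(\log2)^2/\pi^2$. Constants: $A_s,B_s>0$ are constants depending only on $s$ such that for all $N\ge1$ and $r\ge2$, if $\boldsymbol k_1,\dots,\boldsymbol k_r$ are i.i.d. uniform on $Q_N$ then $\Pr(\oplus_{i=1}^r\boldsymbol k_i\in Q_N)\le A_s^rN^{r/4}r^{-B_s\sqrt N}$ (such constants exist). Set $c_s=\frac14B_s\sqrt{\lambda/s}$ and $N_m=\sup\{N\in\mathbb N_0:|Q_N|\le c_sm2^m\}$. Randomization: random $C_j\in\{0,1\}^{\infty\times m}$ with all entries i.i.d. uniform on $\{0,1\}$ (complete random design), and digital shifts $\vec D_j\in\{0,1\}^\infty$ with i.i.d. uniform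 entries, independent of the $C_j$. $Z(\boldsymbol k)=\mathbf 1\{\sum_j\sum_{\ell\in\kappa_j}C_j(\ell,:)=\boldsymbol0\bmod2\}$ and $S(\boldsymbol k)=(-1)^{\sum_j\vec k_j^{\mathsf T}\vec D_j}$. $d_{TV}(X,Y)=\sup_{A\text{ Borel}}|\Pr(X\in A)-\Pr(Y\in A)|$. *)

theory Defs
  imports "HOL-Analysis.Analysis" "HOL-Probability.Probability"
begin

text \<open>Digit set kappa of k: positions l >= 1 with a_l = 1, where k = sum a_l 2^(l-1).\<close>
definition digits :: "nat \<Rightarrow> nat set" where
  "digits k = {l. 1 \<le> l \<and> bit k (l - 1)}"

definition knorm :: "('n::finite \<Rightarrow> nat) \<Rightarrow> nat" where
  "knorm k = (\<Sum>j\<in>UNIV. \<Sum>l\<in>digits (k j). l)"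

definition Qset :: "nat \<Rightarrow> ('n::finite \<Rightarrow> nat) set" where
  "Qset N = {k. k \<noteq> (\<lambda>_. 0) \<and> knorm k \<le> N}"

definition xdigit :: "real \<Rightarrow> nat \<Rightarrow> nat" where
  "xdigit x l = nat \<lfloor>2 ^ l * x\<rfloor> mod 2"

definition walsh :: "('n::finite \<Rightarrow> nat) \<Rightarrow> real^'n \<Rightarrow> real" where
  "walsh k x = (-1) ^ (\<Sum>j\<in>UNIV. \<Sum>l\<in>digits (k j). xdigit (x $ j) l)"

definition walsh_coeff :: "(real^'n \<Rightarrow> real) \<Rightarrow> ('n::finite \<Rightarrow> nat) \<Rightarrow> real" where
  "walsh_coeff f k = integral (cbox 0 One) (\<lambda>x. f x * walsh k x)"

definition xorsum :: "nat \<Rightarrow> (nat \<Rightarrow> 'n \<Rightarrow> nat) \<Rightarrow> ('n \<Rightarrow> nat)" where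
  "xorsum r ks = (\<lambda>j. fold (\<lambda>i acc. xor acc (ks i j)) [0..<r] 0)"

text \<open>The assumed property of the constants A_s, B_s: for N >= 1, r >= 2 and
  k_1..k_r i.i.d. uniform on Q_N, Pr(xor of the k_i in Q_N) <= A^r N^(r/4) r^(-B sqrt N).\<close>
definition xor_bound :: "'n::finite itself \<Rightarrow> real \<Rightarrow> real \<Rightarrow> bool" where
  "xor_bound _ A B \<longleftrightarrow> (\<forall>N r. 1 \<le> N \<longrightarrow> 2 \<le> r \<longrightarrow>
     measure_pmf.prob (pmf_of_set (PiE {..<r} (\<lambda>_. (Qset N :: ('n \<Rightarrow> nat) set))))
        {ks. xorsum r ks \<in> Qset N}
     \<le> A ^ r * real N powr (real r / 4) * real r powr (- B * sqrt (real N)))"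

definition lambda_const :: real where
  "lambda_const = 3 * (ln 2)^2 / pi^2"

definition c_const :: "'n::finite itself \<Rightarrow> real \<Rightarrow> real" where
  "c_const _ B = B / 4 * sqrt (lambda_const / real CARD('n))"

definition Nm :: "'n::finite itself \<Rightarrow> real \<Rightarrow> nat \<Rightarrow> nat" where
  "Nm _ c m = Sup {N. real (card (Qset N :: ('n \<Rightarrow> nat) set)) \<le> c * real m * 2 ^ m}"

fun Ck_on :: "nat \<Rightarrow> ('a::euclidean_space \<Rightarrow> real) \<Rightarrow> 'a set \<Rightarrow> bool" where
  "Ck_on 0 f U = continuous_on U f"
| "Ck_on (Suc k) f U = (f differentiable_on U \<and>
      (\<forall>i\<in>Basis. Ck_on k (\<lambda>x. frechet_derivative f (at x) i) U))"

definition Cinf_on :: "'a::euclidean_space set \<Rightarrow> ('a \<Rightarrow> real) \<Rightarrow> bool" where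
  "Cinf_on S f \<longleftrightarrow> (\<exists>U. open U \<and> S \<subseteq> U \<and> (\<forall>k. Ck_on k f U))"

text \<open>Generating matrices C_j: entries C j l c for rows l in {1..N}, columns c < m
  (rows l > N never enter the sums over Q_N; their values are irrelevant).\<close>
definition Cspace :: "nat \<Rightarrow> nat \<Rightarrow> ('n::finite \<Rightarrow> nat \<Rightarrow> nat \<Rightarrow> bool) set" where
  "Cspace N m = {C. \<forall>j l c. C j l c \<longrightarrow> (1 \<le> l \<and> l \<le> N \<and> c < m)}"

definition Dspace :: "nat \<Rightarrow> ('n::finite \<Rightarrow> nat \<Rightarrow> bool) set" where
  "Dspace N = {D. \<forall>j l. D j l \<longrightarrow> (1 \<le> l \<and> l \<le> N)}"

definition Sspace :: "nat \<Rightarrow> (('n::finite \<Rightarrow> nat) \<Rightarrow> real) set" where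
  "Sspace N = PiE (Qset N) (\<lambda>_. {-1, 1})"

definition Omega :: "nat \<Rightarrow> nat \<Rightarrow>
    (('n::finite \<Rightarrow> nat \<Rightarrow> nat \<Rightarrow> bool) \<times> ('n \<Rightarrow> nat \<Rightarrow> bool) \<times> (('n \<Rightarrow> nat) \<Rightarrow> real)) pmf" where
  "Omega N m = pmf_of_set (Cspace N m \<times> Dspace N \<times> Sspace N)"

definition Zk :: "nat \<Rightarrow> ('n::finite \<Rightarrow> nat \<Rightarrow> nat \<Rightarrow> bool) \<Rightarrow> ('n \<Rightarrow> nat) \<Rightarrow> real" where
  "Zk m C k = of_bool (\<forall>c<m. even (\<Sum>j\<in>UNIV. \<Sum>l\<in>digits (k j). (of_bool (C j l c) :: nat)))"

definition Sk :: "('n::finite \<Rightarrow> nat \<Rightarrow> bool) \<Rightarrow> ('n \<Rightarrow> nat) \<Rightarrow> real" where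
  "Sk D k = (-1) ^ (\<Sum>j\<in>UNIV. \<Sum>l\<in>digits (k j). (of_bool (D j l) :: nat))"

definition SUM1 :: "(real^'n \<Rightarrow> real) \<Rightarrow> nat \<Rightarrow> nat \<Rightarrow>
    (('n::finite \<Rightarrow> nat \<Rightarrow> nat \<Rightarrow> bool) \<times> ('n \<Rightarrow> nat \<Rightarrow> bool) \<times> (('n \<Rightarrow> nat) \<Rightarrow> real)) \<Rightarrow> real" where
  "SUM1 f N m \<omega> = (case \<omega> of (C, D, S') \<Rightarrow>
      \<Sum>k\<in>Qset N. Zk m C k * Sk D k * walsh_coeff f k)"

definition SUM1' :: "(real^'n \<Rightarrow> real) \<Rightarrow> nat \<Rightarrow> nat \<Rightarrow>
    (('n::finite \<Rightarrow> nat \<Rightarrow> nat \<Rightarrow> bool) \<times> ('n \<Rightarrow> nat \<Rightarrow> bool) \<times> (('n \<Rightarrow> nat) \<Rightarrow> real)) \<Rightarrow> real" where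
  "SUM1' f N m \<omega> = (case \<omega> of (C, D, S') \<Rightarrow>
      \<Sum>k\<in>Qset N. Zk m C k * S' k * walsh_coeff f k)"

definition dTV :: "real pmf \<Rightarrow> real pmf \<Rightarrow> real" where
  "dTV p q = (SUP A\<in>sets borel. \<bar>measure_pmf.prob p A - measure_pmf.prob q A\<bar>)"

end

theory Submission
  imports Defs "HOL-Real_Asymp.Real_Asymp"
begin

lemma digits_ge1: "l \<in> digits a \<Longrightarrow> 1 \<le> l"
  by (simp add: digits_def)

lemma bit_imp_ge: "bit (a::nat) n \<Longrightarrow> 2 ^ n \<le> a"
proof (rule ccontr)
  assume "bit a n" "\<not> 2 ^ n \<le> a"
  then have "a div 2 ^ n = 0" by simp
  with \<open>bit a n\<close> show False by (simp add: bit_iff_odd)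
qed

lemma digits_le: "l \<in> digits a \<Longrightarrow> l \<le> a"
proof -
  assume "l \<in> digits a"
  then have "1 \<le> l" "bit a (l - 1)" by (auto simp: digits_def)
  then have "2 ^ (l - 1) \<le> a" using bit_imp_ge by blast
  moreover have "l - 1 < 2 ^ (l - 1)" by simp
  ultimately show ?thesis using \<open>1 \<le> l\<close> by linarith
qed

lemma finite_digits[simp]: "finite (digits a)"
  by (rule finite_subset[of _ "{..a}"]) (auto dest: digits_le)

lemma digits_inj: "digits a = digits b \<Longrightarrow> a = b"
proof -
  assume h: "digits a = digits b"
  have "\<forall>n. bit a n = bit b n"
  proof
    fix n
    have "Suc n \<in> digits a \<longleftrightarrow> Suc n \<in> digits b" using h by simp
    then show "bit a n = bit b n" by (simp add: digits_def)
  qed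
  then show "a = b" by (simp add: bit_eq_iff)
qed

lemma digits_0[simp]: "digits 0 = {}"
  by (simp add: digits_def)

lemma digits_empty_iff: "digits a = {} \<longleftrightarrow> a = 0"
  using digits_inj[of a 0] by auto

lemma nonzero_has_digit:
  assumes "(k::'n::finite \<Rightarrow> nat) \<noteq> (\<lambda>_. 0)"
  shows "\<exists>j l. l \<in> digits (k j)"
proof -
  obtain j where "k j \<noteq> 0" using assms by auto
  then have "digits (k j) \<noteq> {}" by (simp add: digits_empty_iff)
  then show ?thesis by auto
qed

lemma digit_le_knorm:
  assumes "l \<in> digits (k j)"
  shows "l \<le> knorm k"
proof -
  have "l \<le> (\<Sum>l\<in>digits (k j). l)" using assms member_le_sum[of l "digits (k j)" "\<lambda>l. l"] by auto
  also have "\<dots> \<le> (\<Sum>j\<in>UNIV. \<Sum>l\<in>digits (k j). l)"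
    using member_le_sum[of j UNIV "\<lambda>j. \<Sum>l\<in>digits (k j). l"] by auto
  finally show ?thesis by (simp add: knorm_def)
qed

lemma Qset_digit_le: "k \<in> Qset N \<Longrightarrow> l \<in> digits (k j) \<Longrightarrow> l \<le> N"
  using digit_le_knorm[of l k j] by (auto simp: Qset_def)

lemma Qset_less: 
  assumes "k \<in> Qset N" shows "k j < 2 ^ N"
proof -
  have "\<forall>n. bit (take_bit N (k j)) n = bit (k j) n"
  proof
    fix n
    show "bit (take_bit N (k j)) n = bit (k j) n"
    proof (cases "bit (k j) n")
      case True
      then have "Suc n \<in> digits (k j)" by (simp add: digits_def)
      then have "Suc n \<le> N" using Qset_digit_le[OF assms] by blast
      then show ?thesis using True by (simp add: bit_take_bit_iff)
    next
      case False then show ?thesis by (simp add: bit_take_bit_iff)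
    qed
  qed
  then have "take_bit N (k j) = k j" by (simp add: bit_eq_iff)
  then show ?thesis by (metis take_bit_nat_less_exp)
qed

lemma finite_Qset[simp]: "finite (Qset N :: ('n::finite \<Rightarrow> nat) set)"
proof (rule finite_subset)
  show "Qset N \<subseteq> PiE UNIV (\<lambda>_. {..<(2::nat)^N})"
    using Qset_less by (auto simp: PiE_UNIV_domain)
  show "finite (PiE UNIV (\<lambda>_. {..<(2::nat)^N}) :: ('n \<Rightarrow> nat) set)"
    by (intro finite_PiE) auto
qed

lemma Qset_mono: "N \<le> N' \<Longrightarrow> Qset N \<subseteq> Qset N'"
  by (auto simp: Qset_def)

lemma sum_zero_involution:
  fixes f :: "'a \<Rightarrow> real"
  assumes "finite X" "\<And>x. x \<in> X \<Longrightarrow> g x \<in> X" "\<And>x. x \<in> X \<Longrightarrow> g (g x) = x"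
    and "\<And>x. x \<in> X \<Longrightarrow> f (g x) = - f x"
  shows "sum f X = 0"
proof -
  have bij: "bij_betw g X X"
    by (rule bij_betw_byWitness[of _ g]) (use assms in auto)
  have "sum f X = sum (f \<circ> g) X"
    using sum.reindex_bij_betw[OF bij, of f] by simp
  also have "\<dots> = - sum f X" using assms(4) by (simp add: sum_negf)
  finally show ?thesis by simp
qed

lemma prod_flip:
  fixes a :: "'a \<Rightarrow> real"
  assumes "finite U"
  shows "(\<Prod>u\<in>U. if u \<in> W then - a u else a u) = (-1) ^ card (U \<inter> W) * prod a U"
  using assms
proof (induction U rule: finite_induct)
  case empty then show ?case by simp
next
  case (insert x F)
  show ?case
  proof (cases "x \<in> W")
    case True
    then have "insert x F \<inter> W = insert x (F \<inter> W)" by auto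
    then have "card (insert x F \<inter> W) = Suc (card (F \<inter> W))"
      using insert by (simp add: card_insert_if)
    then show ?thesis using insert True by simp
  next
    case False
    then have "insert x F \<inter> W = F \<inter> W" by auto
    then show ?thesis using insert False by simp
  qed
qed

lemma uniform_from_fourier:
  fixes Y :: "'x \<Rightarrow> 'k \<Rightarrow> real"
  assumes X: "finite X" and K: "finite K"
    and pm: "\<And>x k. x \<in> X \<Longrightarrow> k \<in> K \<Longrightarrow> Y x k = -1 \<or> Y x k = 1"
    and four: "\<And>U. U \<subseteq> K \<Longrightarrow> U \<noteq> {} \<Longrightarrow> (\<Sum>x\<in>X. \<Prod>k\<in>U. Y x k) = 0"
    and v: "\<And>k. k \<in> K \<Longrightarrow> v k = -1 \<or> v k = 1"
  shows "real (card {x\<in>X. \<forall>k\<in>K. Y x k = v k}) * 2 ^ card K = real (card X)"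
proof -
  have ind: "of_bool (\<forall>k\<in>K. Y x k = v k) = (\<Prod>k\<in>K. (1 + Y x k * v k) / 2)" if "x \<in> X" for x
  proof (cases "\<forall>k\<in>K. Y x k = v k")
    case True
    then have "\<forall>k\<in>K. (1 + Y x k * v k) / 2 = 1" using v by fastforce
    then show ?thesis using True by simp
  next
    case False
    then obtain k where "k \<in> K" "Y x k \<noteq> v k" by auto
    then have "(1 + Y x k * v k) / 2 = 0" using pm[OF that] v by fastforce
    then have "(\<Prod>k\<in>K. (1 + Y x k * v k) / 2) = 0"
      using \<open>k \<in> K\<close> K by (intro prod_zero) auto
    then show ?thesis using False by simp
  qed
  have "real (card {x\<in>X. \<forall>k\<in>K. Y x k = v k}) = (\<Sum>x\<in>X. of_bool (\<forall>k\<in>K. Y x k = v k))"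
    using X by (simp add: sum.If_cases Int_def)
  also have "\<dots> = (\<Sum>x\<in>X. (\<Prod>k\<in>K. (1 + Y x k * v k)) / 2 ^ card K)"
    using ind by (intro sum.cong refl) (simp add: prod_dividef)
  also have "\<dots> = (\<Sum>x\<in>X. \<Sum>U\<in>Pow K. \<Prod>k\<in>U. Y x k * v k) / 2 ^ card K"
    by (simp add: sum_divide_distrib prod_add[OF K] add.commute[of 1] )
  also have "(\<Sum>x\<in>X. \<Sum>U\<in>Pow K. \<Prod>k\<in>U. Y x k * v k) = (\<Sum>U\<in>Pow K. (\<Prod>k\<in>U. v k) * (\<Sum>x\<in>X. \<Prod>k\<in>U. Y x k))"
    by (subst sum.swap) (simp add: prod.distrib sum_distrib_left mult.commute)
  also have "\<dots> = (\<Sum>U\<in>{{}}. (\<Prod>k\<in>U. v k) * (\<Sum>x\<in>X. \<Prod>k\<in>U. Y x k))"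
    using K by (intro sum.mono_neutral_right) (auto simp: four)
  also have "\<dots> = real (card X)" by simp
  finally show ?thesis by simp
qed


lemma dist_from_fourier:
  fixes Y :: "'x \<Rightarrow> 'k \<Rightarrow> real"
  assumes X: "finite X" and K: "finite K"
    and pm: "\<And>x k. x \<in> X \<Longrightarrow> k \<in> K \<Longrightarrow> Y x k = -1 \<or> Y x k = 1"
    and four: "\<And>U. U \<subseteq> K \<Longrightarrow> U \<noteq> {} \<Longrightarrow> (\<Sum>x\<in>X. \<Prod>k\<in>U. Y x k) = 0"
  shows "real (card {x\<in>X. g (restrict (Y x) K)}) * 2 ^ card K
       = real (card X) * real (card {v \<in> PiE K (\<lambda>_. {-1,1}). g v})"
proof -
  define V where "V = {v \<in> PiE K (\<lambda>_. {-1::real,1}). g v}"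
  have "V \<subseteq> PiE K (\<lambda>_. {-1,1})" unfolding V_def by auto
  moreover have "finite (PiE K (\<lambda>_. {-1::real,1}))" using K by (intro finite_PiE) auto
  ultimately have finV: "finite V" by (rule finite_subset)
  have eq: "{x\<in>X. g (restrict (Y x) K)} = (\<Union>v\<in>V. {x\<in>X. \<forall>k\<in>K. Y x k = v k})"
  proof (intro equalityI subsetI)
    fix x assume "x \<in> {x\<in>X. g (restrict (Y x) K)}"
    then have x: "x \<in> X" "g (restrict (Y x) K)" by auto
    have "restrict (Y x) K \<in> V" unfolding V_def using x pm by auto
    moreover have "\<forall>k\<in>K. Y x k = restrict (Y x) K k" by simp
    ultimately show "x \<in> (\<Union>v\<in>V. {x\<in>X. \<forall>k\<in>K. Y x k = v k})" using x by blast
  next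
    fix x assume "x \<in> (\<Union>v\<in>V. {x\<in>X. \<forall>k\<in>K. Y x k = v k})"
    then obtain v where v: "v \<in> V" "x \<in> X" "\<forall>k\<in>K. Y x k = v k" by auto
    have "restrict (Y x) K = v"
      using v unfolding V_def by (auto simp: fun_eq_iff PiE_def extensional_def)
    then show "x \<in> {x\<in>X. g (restrict (Y x) K)}" using v unfolding V_def by auto
  qed
  have "card {x\<in>X. g (restrict (Y x) K)} = (\<Sum>v\<in>V. card {x\<in>X. \<forall>k\<in>K. Y x k = v k})"
    unfolding eq
  proof (rule card_UN_disjoint[OF finV])
    show "\<forall>v\<in>V. finite {x \<in> X. \<forall>k\<in>K. Y x k = v k}" using X by auto
    show "\<forall>v\<in>V. \<forall>w\<in>V. v \<noteq> w \<longrightarrow> {x \<in> X. \<forall>k\<in>K. Y x k = v k} \<inter> {x \<in> X. \<forall>k\<in>K. Y x k = w k} = {}"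
    proof (intro ballI impI)
      fix v w assume vw: "v \<in> V" "w \<in> V" "v \<noteq> w"
      show "{x \<in> X. \<forall>k\<in>K. Y x k = v k} \<inter> {x \<in> X. \<forall>k\<in>K. Y x k = w k} = {}"
      proof (rule ccontr)
        assume "{x \<in> X. \<forall>k\<in>K. Y x k = v k} \<inter> {x \<in> X. \<forall>k\<in>K. Y x k = w k} \<noteq> {}"
        then have "\<forall>k\<in>K. v k = w k" by auto
        then have "v = w" using vw unfolding V_def by (intro PiE_ext[of v K "\<lambda>_. {-1,1}"]) auto
        with vw show False by simp
      qed
    qed
  qed
  then have "real (card {x\<in>X. g (restrict (Y x) K)}) * 2 ^ card K
      = (\<Sum>v\<in>V. real (card {x\<in>X. \<forall>k\<in>K. Y x k = v k}) * 2 ^ card K)"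
    by (simp add: sum_distrib_right)
  also have "\<dots> = (\<Sum>v\<in>V. real (card X))"
  proof (intro sum.cong refl)
    fix v assume "v \<in> V"
    then have "\<And>k. k \<in> K \<Longrightarrow> v k = -1 \<or> v k = 1" unfolding V_def by auto
    then show "real (card {x\<in>X. \<forall>k\<in>K. Y x k = v k}) * 2 ^ card K = real (card X)"
      using uniform_from_fourier[OF X K pm four, of v] by blast
  qed
  also have "\<dots> = real (card X) * real (card V)" by simp
  finally show ?thesis unfolding V_def .
qed

definition par :: "'a set \<Rightarrow> ('a \<Rightarrow> bool) \<Rightarrow> real" where
  "par P F = (-1) ^ (\<Sum>p\<in>P. (of_bool (F p) :: nat))"

lemma par_pm: "par P F = -1 \<or> par P F = 1"
  unfolding par_def by (cases "even (\<Sum>p\<in>P. (of_bool (F p) :: nat))") auto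

lemma par_flip:
  assumes "finite P"
  shows "par P (\<lambda>p. if p = p0 then \<not> F p else F p) = (if p0 \<in> P then - par P F else par P F)"
proof (cases "p0 \<in> P")
  case False
  then have "(\<Sum>p\<in>P. (of_bool (if p = p0 then \<not> F p else F p) :: nat)) = (\<Sum>p\<in>P. of_bool (F p))"
    by (intro sum.cong) auto
  then show ?thesis using False by (simp add: par_def)
next
  case True
  define G where "G = (\<lambda>p. if p = p0 then \<not> F p else F p)"
  have s1: "(\<Sum>p\<in>P. (of_bool (G p) :: nat))
      = of_bool (\<not> F p0) + (\<Sum>p\<in>P - {p0}. of_bool (F p))"
  proof -
    have "(\<Sum>p\<in>P. (of_bool (G p) :: nat)) = of_bool (G p0) + (\<Sum>p\<in>P - {p0}. of_bool (G p))"
      by (rule sum.remove[OF assms True])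
    also have "(\<Sum>p\<in>P - {p0}. (of_bool (G p) :: nat)) = (\<Sum>p\<in>P - {p0}. of_bool (F p))"
      by (intro sum.cong) (auto simp: G_def)
    finally show ?thesis by (simp add: G_def)
  qed
  have s2: "(\<Sum>p\<in>P. (of_bool (F p) :: nat)) = of_bool (F p0) + (\<Sum>p\<in>P - {p0}. of_bool (F p))"
    by (rule sum.remove[OF assms True])
  have "par P G = (if p0 \<in> P then - par P F else par P F)"
    using True unfolding par_def s1 s2 by (cases "F p0") (auto simp: power_add)
  then show ?thesis by (simp add: G_def)
qed

lemma par_one_iff: "par P F = 1 \<longleftrightarrow> even (\<Sum>p\<in>P. (of_bool (F p) :: nat))"
  unfolding par_def by (cases "even (\<Sum>p\<in>P. (of_bool (F p) :: nat))") auto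

definition Dg :: "('n::finite \<Rightarrow> nat) \<Rightarrow> ('n \<times> nat) set" where
  "Dg k = Sigma UNIV (\<lambda>j. digits (k j))"

lemma finite_Dg[simp]: "finite (Dg k)"
  unfolding Dg_def by auto

lemma sum_Dg: "(\<Sum>j\<in>UNIV. \<Sum>l\<in>digits (k j). f j l) = (\<Sum>(j,l)\<in>Dg k. f j l)"
  unfolding Dg_def by (subst sum.Sigma) auto

lemma Sk_par: "Sk D k = par (Dg k) (\<lambda>(j,l). D j l)"
  unfolding Sk_def par_def sum_Dg by (simp add: case_prod_unfold)

definition YC :: "('n::finite \<Rightarrow> nat) \<Rightarrow> nat \<Rightarrow> ('n \<Rightarrow> nat \<Rightarrow> nat \<Rightarrow> bool) \<Rightarrow> real" where
  "YC k c C = par (Dg k) (\<lambda>(j,l). C j l c)"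

lemma Zk_iff: "Zk m C k = 1 \<longleftrightarrow> (\<forall>c<m. YC k c C = 1)"
proof -
  have "\<And>c. (\<Sum>p\<in>Dg k. (of_bool ((\<lambda>(j,l). C j l c) p) :: nat)) = (\<Sum>j\<in>UNIV. \<Sum>l\<in>digits (k j). of_bool (C j l c))"
    by (subst sum_Dg) (simp add: case_prod_unfold)
  then have e: "\<And>c. YC k c C = 1 \<longleftrightarrow> even (\<Sum>j\<in>UNIV. \<Sum>l\<in>digits (k j). (of_bool (C j l c) :: nat))"
    unfolding YC_def par_one_iff by metis
  show ?thesis unfolding Zk_def e of_bool_eq_1_iff by (rule refl)
qed

lemma Zk_01: "Zk m C k = 0 \<or> Zk m C k = 1"
  unfolding Zk_def of_bool_def by simp

definition flipD :: "'n \<Rightarrow> nat \<Rightarrow> ('n \<Rightarrow> nat \<Rightarrow> bool) \<Rightarrow> ('n \<Rightarrow> nat \<Rightarrow> bool)" where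
  "flipD j0 l0 D = (\<lambda>j l. if j = j0 \<and> l = l0 then \<not> D j l else D j l)"

definition flipC :: "'n \<Rightarrow> nat \<Rightarrow> nat \<Rightarrow> ('n \<Rightarrow> nat \<Rightarrow> nat \<Rightarrow> bool) \<Rightarrow> ('n \<Rightarrow> nat \<Rightarrow> nat \<Rightarrow> bool)" where
  "flipC j0 l0 c0 C = (\<lambda>j l c. if j = j0 \<and> l = l0 \<and> c = c0 then \<not> C j l c else C j l c)"

lemma Sk_flipD: "Sk (flipD j0 l0 D) k = (if l0 \<in> digits (k j0) then - Sk D k else Sk D k)"
proof -
  have "Sk (flipD j0 l0 D) k = par (Dg k) (\<lambda>p. if p = (j0,l0) then \<not> (\<lambda>(j,l). D j l) p else (\<lambda>(j,l). D j l) p)"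
    unfolding Sk_par flipD_def by (intro arg_cong[where f="par (Dg k)"]) auto
  also have "\<dots> = (if (j0,l0) \<in> Dg k then - Sk D k else Sk D k)"
    by (subst par_flip) (auto simp: Sk_par)
  finally show ?thesis by (simp add: Dg_def)
qed

lemma YC_flipC: "YC k c (flipC j0 l0 c0 C) = (if c = c0 \<and> l0 \<in> digits (k j0) then - YC k c C else YC k c C)"
proof (cases "c = c0")
  case True
  have "YC k c (flipC j0 l0 c0 C) = par (Dg k) (\<lambda>p. if p = (j0,l0) then \<not> (\<lambda>(j,l). C j l c) p else (\<lambda>(j,l). C j l c) p)"
    unfolding YC_def flipC_def using True by (intro arg_cong[where f="par (Dg k)"]) auto
  also have "\<dots> = (if (j0,l0) \<in> Dg k then - YC k c C else YC k c C)"
    by (subst par_flip) (auto simp: YC_def)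
  finally show ?thesis using True by (simp add: Dg_def)
next
  case False
  then show ?thesis unfolding YC_def flipC_def by (simp add: case_prod_unfold)
qed

lemma flipD_flipD[simp]: "flipD j0 l0 (flipD j0 l0 D) = D"
  by (auto simp: flipD_def fun_eq_iff)

lemma flipC_flipC[simp]: "flipC j0 l0 c0 (flipC j0 l0 c0 C) = C"
  by (auto simp: flipC_def fun_eq_iff)

lemma flipD_Dspace: "D \<in> Dspace N \<Longrightarrow> 1 \<le> l0 \<Longrightarrow> l0 \<le> N \<Longrightarrow> flipD j0 l0 D \<in> Dspace N"
  by (auto simp: Dspace_def flipD_def)

lemma flipC_Cspace: "C \<in> Cspace N m \<Longrightarrow> 1 \<le> l0 \<Longrightarrow> l0 \<le> N \<Longrightarrow> c0 < m \<Longrightarrow> flipC j0 l0 c0 C \<in> Cspace N m"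
  by (auto simp: Cspace_def flipC_def)

lemma finite_Cspace: "finite (Cspace N m :: ('n::finite \<Rightarrow> nat \<Rightarrow> nat \<Rightarrow> bool) set)"
proof -
  let ?g = "\<lambda>S::('n \<times> nat \<times> nat) set. (\<lambda>j l c. (j,l,c) \<in> S)"
  have "Cspace N m \<subseteq> ?g ` Pow (UNIV \<times> {1..N} \<times> {..<m})"
  proof
    fix C :: "'n \<Rightarrow> nat \<Rightarrow> nat \<Rightarrow> bool" assume "C \<in> Cspace N m"
    then have "{(j,l,c). C j l c} \<in> Pow (UNIV \<times> {1..N} \<times> {..<m})" by (auto simp: Cspace_def)
    moreover have "C = ?g {(j,l,c). C j l c}" by simp
    ultimately show "C \<in> ?g ` Pow (UNIV \<times> {1..N} \<times> {..<m})" by blast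
  qed
  then show ?thesis by (rule finite_subset) auto
qed

lemma finite_Dspace: "finite (Dspace N :: ('n::finite \<Rightarrow> nat \<Rightarrow> bool) set)"
proof -
  let ?g = "\<lambda>S::('n \<times> nat) set. (\<lambda>j l. (j,l) \<in> S)"
  have "Dspace N \<subseteq> ?g ` Pow (UNIV \<times> {1..N})"
  proof
    fix C :: "'n \<Rightarrow> nat \<Rightarrow> bool" assume "C \<in> Dspace N"
    then have "{(j,l). C j l} \<in> Pow (UNIV \<times> {1..N})" by (auto simp: Dspace_def)
    moreover have "C = ?g {(j,l). C j l}" by simp
    ultimately show "C \<in> ?g ` Pow (UNIV \<times> {1..N})" by blast
  qed
  then show ?thesis by (rule finite_subset) auto
qed

lemma finite_Sspace: "finite (Sspace N :: (('n::finite \<Rightarrow> nat) \<Rightarrow> real) set)"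
  unfolding Sspace_def by (intro finite_PiE) auto

lemma Cspace_ne: "(\<lambda>_ _ _. False) \<in> Cspace N m" by (simp add: Cspace_def)
lemma Dspace_ne: "(\<lambda>_ _. False) \<in> Dspace N" by (simp add: Dspace_def)
lemma Sspace_ne: "(\<lambda>k\<in>Qset N. 1) \<in> Sspace N" by (simp add: Sspace_def)

definition indep :: "('n::finite \<Rightarrow> nat) set \<Rightarrow> bool" where
  "indep T \<longleftrightarrow> (\<forall>U\<subseteq>T. U \<noteq> {} \<longrightarrow> (\<exists>j l. odd (card {k\<in>U. l \<in> digits (k j)})))"


lemma finite_subset_Q: "T \<subseteq> Qset N \<Longrightarrow> finite T"
  using finite_Qset finite_subset by blast

lemma count_C:
  fixes T :: "('n::finite \<Rightarrow> nat) set"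
  assumes TQ: "T \<subseteq> Qset N" and ind: "indep T"
  shows "real (card {C\<in>Cspace N m. \<forall>k\<in>T. Zk m C k = 1}) * 2 ^ (card T * m) = real (card (Cspace N m :: ('n \<Rightarrow> nat \<Rightarrow> nat \<Rightarrow> bool) set))"
proof -
  have finT: "finite T" using TQ by (rule finite_subset_Q)
  define K where "K = T \<times> {..<m}"
  define Y where "Y = (\<lambda>C (u :: ('n \<Rightarrow> nat) \<times> nat). YC (fst u) (snd u) C)"
  have finK: "finite K" using finT by (simp add: K_def)
  have cardK: "card K = card T * m" by (simp add: K_def card_cartesian_product)
  define v1 where "v1 = (\<lambda>_::('n \<Rightarrow> nat) \<times> nat. 1::real)"
  have set_eq: "{C\<in>Cspace N m. \<forall>k\<in>T. Zk m C k = 1} = {C\<in>Cspace N m. \<forall>u\<in>K. Y C u = v1 u}"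
    by (auto simp: Zk_iff K_def Y_def v1_def)
  have "real (card {C\<in>Cspace N m. \<forall>u\<in>K. Y C u = v1 u}) * 2 ^ card K = real (card (Cspace N m :: ('n \<Rightarrow> nat \<Rightarrow> nat \<Rightarrow> bool) set))"
  proof (rule uniform_from_fourier[where X="Cspace N m" and K=K and Y=Y and v=v1])
    show "finite (Cspace N m :: ('n \<Rightarrow> nat \<Rightarrow> nat \<Rightarrow> bool) set)" by (rule finite_Cspace)
    show "finite K" by (rule finK)
    show "\<And>x k. Y x k = -1 \<or> Y x k = 1" by (simp add: Y_def YC_def par_pm)
    show "\<And>k. v1 k = -1 \<or> v1 k = 1" by (simp add: v1_def)
  next
    fix U assume U: "U \<subseteq> K" "U \<noteq> {}"
    then obtain k1 c0 where kc: "(k1, c0) \<in> U" by auto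
    define U0 where "U0 = {k. (k, c0) \<in> U}"
    have "U0 \<subseteq> T" "U0 \<noteq> {}" using U kc by (auto simp: U0_def K_def)
    then obtain j0 l0 where odd: "odd (card {k\<in>U0. l0 \<in> digits (k j0)})"
      using ind unfolding indep_def by blast
    then have "{k\<in>U0. l0 \<in> digits (k j0)} \<noteq> {}" by (metis card.empty even_zero)
    then obtain k2 where k2: "k2 \<in> U0" "l0 \<in> digits (k2 j0)" by auto
    have k2Q: "k2 \<in> Qset N" using k2 \<open>U0 \<subseteq> T\<close> TQ by auto
    have l0: "1 \<le> l0" "l0 \<le> N" using k2 digits_ge1 Qset_digit_le[OF k2Q] by auto
    have c0: "c0 < m" using kc U by (auto simp: K_def)
    have finU: "finite U" using U finK finite_subset by blast
    define W where "W = {(k, c). c = c0 \<and> l0 \<in> digits (k j0)}"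
    have "U \<inter> W = (\<lambda>k. (k, c0)) ` {k\<in>U0. l0 \<in> digits (k j0)}"
      by (auto simp: W_def U0_def)
    then have cardUW: "card (U \<inter> W) = card {k\<in>U0. l0 \<in> digits (k j0)}"
      by (simp add: card_image inj_on_def)
    show "(\<Sum>C\<in>Cspace N m. \<Prod>k\<in>U. Y C k) = 0"
    proof (rule sum_zero_involution[where X="Cspace N m" and g="flipC j0 l0 c0"])
      show "finite (Cspace N m :: ('n \<Rightarrow> nat \<Rightarrow> nat \<Rightarrow> bool) set)" by (rule finite_Cspace)
      show "\<And>C. C \<in> Cspace N m \<Longrightarrow> flipC j0 l0 c0 C \<in> Cspace N m"
        using flipC_Cspace l0 c0 by blast
      show "\<And>C. C \<in> Cspace N m \<Longrightarrow> flipC j0 l0 c0 (flipC j0 l0 c0 C) = C" by simp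
      fix C
      have "(\<Prod>u\<in>U. Y (flipC j0 l0 c0 C) u) = (\<Prod>u\<in>U. if u \<in> W then - Y C u else Y C u)"
        by (intro prod.cong refl) (auto simp: Y_def YC_flipC W_def)
      also have "\<dots> = (-1) ^ card (U \<inter> W) * (\<Prod>u\<in>U. Y C u)"
        by (rule prod_flip[OF finU])
      also have "\<dots> = - (\<Prod>u\<in>U. Y C u)" using odd cardUW by simp
      finally show "(\<Prod>u\<in>U. Y (flipC j0 l0 c0 C) u) = - (\<Prod>u\<in>U. Y C u)" .
    qed
  qed
  then show ?thesis using set_eq cardK by simp
qed

lemma indep_single: "k \<in> Qset N \<Longrightarrow> indep {k}"
proof -
  assume "k \<in> Qset N"
  then have "k \<noteq> (\<lambda>_. 0)" by (simp add: Qset_def)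
  then obtain j l where jl: "l \<in> digits (k j)" using nonzero_has_digit by blast
  show "indep {k}" unfolding indep_def
  proof (intro allI impI)
    fix U assume "U \<subseteq> {k}" "U \<noteq> {}"
    then have "U = {k}" by auto
    then have "{k'\<in>U. l \<in> digits (k' j)} = {k}" using jl by auto
    then have "card {k'\<in>U. l \<in> digits (k' j)} = 1" by simp
    then show "\<exists>j l. odd (card {k\<in>U. l \<in> digits (k j)})" by (metis odd_one)
  qed
qed

lemma indep_pair: "k \<in> Qset N \<Longrightarrow> k' \<in> Qset N \<Longrightarrow> k \<noteq> k' \<Longrightarrow> indep {k, k'}"
proof -
  assume k: "k \<in> Qset N" and k': "k' \<in> Qset N" and ne: "k \<noteq> k'"
  then have "k \<noteq> (\<lambda>_. 0)" "k' \<noteq> (\<lambda>_. 0)" by (auto simp: Qset_def)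
  then obtain j l j' l' where jl: "l \<in> digits (k j)" and jl': "l' \<in> digits (k' j')"
    using nonzero_has_digit by metis
  obtain j2 where "k j2 \<noteq> k' j2" using ne by auto
  then have "digits (k j2) \<noteq> digits (k' j2)" using digits_inj by blast
  then obtain l2 where l2: "(l2 \<in> digits (k j2)) \<noteq> (l2 \<in> digits (k' j2))" by blast
  show "indep {k, k'}" unfolding indep_def
  proof (intro allI impI)
    fix U assume U: "U \<subseteq> {k, k'}" "U \<noteq> {}"
    then have "U = {k} \<or> U = {k'} \<or> U = {k, k'}" by auto
    then show "\<exists>j l. odd (card {k\<in>U. l \<in> digits (k j)})"
    proof (elim disjE)
      assume "U = {k}"
      then have "{k'\<in>U. l \<in> digits (k' j)} = {k}" using jl by auto
    then have "card {k'\<in>U. l \<in> digits (k' j)} = 1" by simp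
      then show ?thesis by (metis odd_one)
    next
      assume "U = {k'}"
      then have "{k\<in>U. l' \<in> digits (k j')} = {k'}" using jl' by auto
      then have "card {k\<in>U. l' \<in> digits (k j')} = 1" by simp
      then show ?thesis by (metis odd_one)
    next
      assume "U = {k, k'}"
      then have "{k2\<in>U. l2 \<in> digits (k2 j2)} = {k} \<or> {k2\<in>U. l2 \<in> digits (k2 j2)} = {k'}"
        using l2 by auto
      then have "card {k2\<in>U. l2 \<in> digits (k2 j2)} = 1" by auto
      then show ?thesis by (metis odd_one)
    qed
  qed
qed

lemma count_C1:
  fixes k :: "'n::finite \<Rightarrow> nat"
  assumes "k \<in> Qset N"
  shows "real (card {C\<in>Cspace N m. Zk m C k = 1}) * 2 ^ m = real (card (Cspace N m :: ('n \<Rightarrow> nat \<Rightarrow> nat \<Rightarrow> bool) set))"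
  using count_C[of "{k}" N m] assms indep_single[OF assms] by simp

lemma count_C2:
  fixes k :: "'n::finite \<Rightarrow> nat"
  assumes "k \<in> Qset N" "k' \<in> Qset N" "k \<noteq> k'"
  shows "real (card {C\<in>Cspace N m. Zk m C k = 1 \<and> Zk m C k' = 1}) * 4 ^ m = real (card (Cspace N m :: ('n \<Rightarrow> nat \<Rightarrow> nat \<Rightarrow> bool) set))"
proof -
  have "real (card {C\<in>Cspace N m. \<forall>x\<in>{k,k'}. Zk m C x = 1}) * 2 ^ (card {k,k'} * m) = real (card (Cspace N m :: ('n \<Rightarrow> nat \<Rightarrow> nat \<Rightarrow> bool) set))"
    using count_C[of "{k,k'}" N m] assms indep_pair[OF assms] by simp
  moreover have "card {k,k'} = 2" using assms(3) by simp
  moreover have "(2::real) ^ (2 * m) = (2^2) ^ m" by (rule power_mult)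
  ultimately show ?thesis by simp
qed


type_synonym 'n cmat = "'n \<Rightarrow> nat \<Rightarrow> nat \<Rightarrow> bool"
type_synonym 'n kvec = "'n \<Rightarrow> nat"

lemma Zk_of_bool: "Zk m C k = of_bool (Zk m C k = 1)"
  using Zk_01[of m C k] by auto

lemma Zk_mult: "Zk m C k * Zk m C k' = of_bool (Zk m C k = 1 \<and> Zk m C k' = 1)"
  using Zk_01[of m C k] Zk_01[of m C k'] by auto

lemma Zk_sq: "Zk m C k * Zk m C k = Zk m C k"
  using Zk_01[of m C k] by auto

lemma sum_of_bool_card: "finite A \<Longrightarrow> (\<Sum>x\<in>A. (of_bool (P x) :: real)) = real (card {x\<in>A. P x})"
  by (simp add: sum.If_cases Int_def)

definition Xc :: "nat \<Rightarrow> nat \<Rightarrow> ('n::finite \<Rightarrow> nat \<Rightarrow> nat \<Rightarrow> bool) \<Rightarrow> real" where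
  "Xc N m C = (\<Sum>k\<in>Qset N. Zk m C k)"

lemma sum_Z_C:
  fixes k :: "'n::finite kvec"
  assumes k: "k \<in> Qset N"
  shows "(\<Sum>C\<in>(Cspace N m :: 'n cmat set). Zk m C k) = real (card (Cspace N m :: 'n cmat set)) / 2 ^ m"
proof -
  have "(\<Sum>C\<in>(Cspace N m :: 'n cmat set). Zk m C k) = (\<Sum>C\<in>(Cspace N m :: 'n cmat set). of_bool (Zk m C k = 1))"
    by (intro sum.cong refl) (rule Zk_of_bool)
  also have "\<dots> = real (card {C\<in>(Cspace N m :: 'n cmat set). Zk m C k = 1})"
    by (rule sum_of_bool_card[OF finite_Cspace])
  also have "\<dots> = real (card (Cspace N m :: 'n cmat set)) / 2 ^ m"
    using count_C1[OF k, of m] by (simp add: field_simps)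
  finally show ?thesis .
qed

lemma sum_ZZ_C:
  fixes k :: "'n::finite kvec"
  assumes k: "k \<in> Qset N" "k' \<in> Qset N" "k \<noteq> k'"
  shows "(\<Sum>C\<in>(Cspace N m :: 'n cmat set). Zk m C k * Zk m C k') = real (card (Cspace N m :: 'n cmat set)) / 4 ^ m"
proof -
  have "(\<Sum>C\<in>(Cspace N m :: 'n cmat set). Zk m C k * Zk m C k') = (\<Sum>C\<in>(Cspace N m :: 'n cmat set). of_bool (Zk m C k = 1 \<and> Zk m C k' = 1))"
    by (intro sum.cong refl) (rule Zk_mult)
  also have "\<dots> = real (card {C\<in>(Cspace N m :: 'n cmat set). Zk m C k = 1 \<and> Zk m C k' = 1})"
    by (rule sum_of_bool_card[OF finite_Cspace])
  also have "\<dots> = real (card (Cspace N m :: 'n cmat set)) / 4 ^ m"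
    using count_C2[OF k, of m] by (simp add: field_simps)
  finally show ?thesis .
qed

lemma sum_Xc:
  "(\<Sum>C\<in>(Cspace N m :: 'n::finite cmat set). Xc N m C) = real (card (Qset N :: 'n kvec set)) * real (card (Cspace N m :: 'n cmat set)) / 2 ^ m"
proof -
  have "(\<Sum>C\<in>(Cspace N m :: 'n cmat set). Xc N m C) = (\<Sum>k\<in>(Qset N :: 'n kvec set). \<Sum>C\<in>(Cspace N m :: 'n cmat set). Zk m C k)"
    unfolding Xc_def by (rule sum.swap)
  also have "\<dots> = (\<Sum>k\<in>(Qset N :: 'n kvec set). real (card (Cspace N m :: 'n cmat set)) / 2 ^ m)"
    by (intro sum.cong refl sum_Z_C)
  finally show ?thesis by simp
qed

lemma sum_Xc2:
  "(\<Sum>C\<in>(Cspace N m :: 'n::finite cmat set). (Xc N m C)^2) =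
     real (card (Cspace N m :: 'n cmat set)) *
     (real (card (Qset N :: 'n kvec set)) / 2 ^ m
      + real (card (Qset N :: 'n kvec set)) * (real (card (Qset N :: 'n kvec set)) - 1) / 4 ^ m)"
proof -
  let ?CS = "Cspace N m :: 'n cmat set"
  let ?Q = "Qset N :: 'n kvec set"
  let ?f = "\<lambda>C k k'. Zk m C k * Zk m C k'"
  have "(\<Sum>C\<in>?CS. (Xc N m C)^2) = (\<Sum>C\<in>?CS. \<Sum>k\<in>?Q. \<Sum>k'\<in>?Q. ?f C k k')"
    unfolding Xc_def power2_eq_square sum_product by simp
  also have "\<dots> = (\<Sum>k\<in>?Q. \<Sum>C\<in>?CS. \<Sum>k'\<in>?Q. ?f C k k')"
    by (rule sum.swap)
  also have "\<dots> = (\<Sum>k\<in>?Q. \<Sum>k'\<in>?Q. \<Sum>C\<in>?CS. ?f C k k')"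
    by (intro sum.cong refl) (rule sum.swap)
  also have "\<dots> = (\<Sum>k\<in>?Q. real (card ?CS) / 2 ^ m + (\<Sum>k'\<in>?Q - {k}. real (card ?CS) / 4 ^ m))"
  proof (intro sum.cong refl)
    fix k assume k: "k \<in> ?Q"
    have "(\<Sum>k'\<in>?Q. \<Sum>C\<in>?CS. ?f C k k') = (\<Sum>C\<in>?CS. ?f C k k) + (\<Sum>k'\<in>?Q - {k}. \<Sum>C\<in>?CS. ?f C k k')"
      using k by (intro sum.remove) auto
    also have "(\<Sum>C\<in>?CS. ?f C k k) = real (card ?CS) / 2 ^ m"
    proof -
      have "(\<Sum>C\<in>?CS. ?f C k k) = (\<Sum>C\<in>?CS. Zk m C k)"
        by (intro sum.cong refl) (rule Zk_sq)
      then show ?thesis using sum_Z_C[OF k] by simp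
    qed
    also have "(\<Sum>k'\<in>?Q - {k}. \<Sum>C\<in>?CS. ?f C k k') = (\<Sum>k'\<in>?Q - {k}. real (card ?CS) / 4 ^ m)"
      using k by (intro sum.cong refl sum_ZZ_C) auto
    finally show "(\<Sum>k'\<in>?Q. \<Sum>C\<in>?CS. ?f C k k') = real (card ?CS) / 2 ^ m + (\<Sum>k'\<in>?Q - {k}. real (card ?CS) / 4 ^ m)" .
  qed
  also have "\<dots> = (\<Sum>k\<in>?Q. real (card ?CS) / 2 ^ m + (real (card ?Q) - 1) * (real (card ?CS) / 4 ^ m))"
  proof (intro sum.cong refl)
    fix k assume k: "k \<in> ?Q"
    then have "card ?Q \<ge> 1" using finite_Qset by (metis One_nat_def Suc_leI card_gt_0_iff empty_iff)
    then have "real (card (?Q - {k})) = real (card ?Q) - 1" using k by (simp add: card_Diff_singleton of_nat_diff)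
    then show "real (card ?CS) / 2 ^ m + (\<Sum>k'\<in>?Q - {k}. real (card ?CS) / 4 ^ m)
      = real (card ?CS) / 2 ^ m + (real (card ?Q) - 1) * (real (card ?CS) / 4 ^ m)" by simp
  qed
  also have "\<dots> = real (card ?Q) * (real (card ?CS) / 2 ^ m + (real (card ?Q) - 1) * (real (card ?CS) / 4 ^ m))"
    by simp
  finally show ?thesis by (simp add: algebra_simps)
qed

lemma chebyshev_count:
  fixes a :: real
  assumes a: "a > 0" and mu: "real (card (Qset N :: 'n::finite kvec set)) / 2 ^ m \<le> a"
  shows "real (card {C \<in> (Cspace N m :: 'n cmat set). Xc N m C > 2 * a}) * a
     \<le> real (card (Cspace N m :: 'n cmat set))"
proof -
  let ?CS = "Cspace N m :: 'n cmat set"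
  let ?Q = "Qset N :: 'n kvec set"
  define mu where "mu = real (card ?Q) / 2 ^ m"
  define q where "q = real (card ?Q)"
  define cs where "cs = real (card ?CS)"
  have mu0: "mu \<ge> 0" by (simp add: mu_def)
  have "(\<Sum>C\<in>?CS. (Xc N m C - mu)^2) = (\<Sum>C\<in>?CS. (Xc N m C)^2 - 2 * mu * Xc N m C + mu^2)"
    by (intro sum.cong refl) (simp add: power2_diff)
  also have "\<dots> = (\<Sum>C\<in>?CS. (Xc N m C)^2) - 2 * mu * (\<Sum>C\<in>?CS. Xc N m C) + cs * mu^2"
    by (simp add: sum.distrib sum_subtractf sum_distrib_left cs_def)
  also have "\<dots> = cs * (q / 2^m + q * (q - 1) / 4^m) - 2 * mu * (q * cs / 2^m) + cs * mu^2"
    unfolding sum_Xc sum_Xc2 q_def cs_def by simp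
  also have "\<dots> = cs * (mu - q / 4 ^ m)"
  proof -
    have "(4::real)^m = 2^m * 2^m" by (metis power_mult_distrib mult_2_right numeral_Bit0 numeral_One one_add_one)
    then show ?thesis unfolding mu_def q_def[symmetric] by (simp add: field_simps power2_eq_square)
  qed
  also have "\<dots> \<le> cs * mu" unfolding cs_def q_def by (intro mult_left_mono) auto
  finally have var: "(\<Sum>C\<in>?CS. (Xc N m C - mu)^2) \<le> cs * mu" .
  have "real (card {C\<in>?CS. Xc N m C > 2 * a}) * a^2 = (\<Sum>C\<in>{C\<in>?CS. Xc N m C > 2 * a}. a^2)"
    by simp
  also have "\<dots> \<le> (\<Sum>C\<in>{C\<in>?CS. Xc N m C > 2 * a}. (Xc N m C - mu)^2)"
  proof (intro sum_mono)
    fix C assume "C \<in> {C\<in>?CS. Xc N m C > 2 * a}"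
    then have "Xc N m C - mu \<ge> a" using mu unfolding mu_def by auto
    then show "a^2 \<le> (Xc N m C - mu)^2" using a by (intro power_mono) auto
  qed
  also have "\<dots> \<le> (\<Sum>C\<in>?CS. (Xc N m C - mu)^2)"
    by (intro sum_mono2 finite_Cspace) auto
  also have "\<dots> \<le> cs * a" 
  proof -
    have "cs * mu \<le> cs * a" using mu unfolding mu_def cs_def by (intro mult_left_mono) auto
    then show ?thesis using var by linarith
  qed
  finally have "real (card {C\<in>?CS. Xc N m C > 2 * a}) * a * a \<le> cs * a"
    by (simp add: power2_eq_square mult.assoc)
  then show ?thesis using a unfolding cs_def by simp
qed


lemma xorsum_Suc: "xorsum (Suc r) ks j = xor (xorsum r ks j) (ks r j)"
  by (simp add: xorsum_def)

lemma bit_xorsum: "bit (xorsum r ks j) b \<longleftrightarrow> odd (card {i\<in>{..<r}. bit (ks i j) b})"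
proof (induction r)
  case 0 then show ?case by (simp add: xorsum_def)
next
  case (Suc r)
  have "{i\<in>{..<Suc r}. bit (ks i j) b} = {i\<in>{..<r}. bit (ks i j) b} \<union> (if bit (ks r j) b then {r} else {})"
    by (auto simp: less_Suc_eq)
  then have "card {i\<in>{..<Suc r}. bit (ks i j) b} = card {i\<in>{..<r}. bit (ks i j) b} + (if bit (ks r j) b then 1 else 0)"
    by (auto simp: card_insert_if)
  then show ?case using Suc by (simp add: xorsum_Suc bit_xor_iff)
qed

lemma xorsum_eq:
  fixes T :: "('n::finite \<Rightarrow> nat) set"
  assumes bij: "bij_betw ks {..<q} T"
    and par: "\<And>j l. odd (card {k\<in>T. l \<in> digits (k j)}) \<longleftrightarrow> l \<in> digits (k0 j)"
  shows "xorsum q ks = k0"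
proof
  fix j
  have "\<forall>b. bit (xorsum q ks j) b = bit (k0 j) b"
  proof
    fix b
    have "{k\<in>T. bit (k j) b} = ks ` {i\<in>{..<q}. bit (ks i j) b}"
      using bij by (auto simp: bij_betw_def)
    moreover have "inj_on ks {i\<in>{..<q}. bit (ks i j) b}"
      using bij by (auto simp: bij_betw_def intro: inj_on_subset)
    ultimately have "card {k\<in>T. bit (k j) b} = card {i\<in>{..<q}. bit (ks i j) b}"
      by (simp add: card_image)
    moreover have "{k\<in>T. Suc b \<in> digits (k j)} = {k\<in>T. bit (k j) b}"
      by (simp add: digits_def)
    ultimately show "bit (xorsum q ks j) b = bit (k0 j) b"
      using par[of "Suc b" j] by (simp add: bit_xorsum digits_def)
  qed
  then show "xorsum q ks j = k0 j" by (simp add: bit_eq_iff)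
qed

definition Kset :: "nat \<Rightarrow> nat \<Rightarrow> ('n::finite \<Rightarrow> nat \<Rightarrow> nat \<Rightarrow> bool) \<Rightarrow> ('n \<Rightarrow> nat) set" where
  "Kset N m C = {k\<in>Qset N. Zk m C k = 1}"

lemma card_Kset: "real (card (Kset N m C)) = Xc N m C"
proof -
  have "Xc N m C = (\<Sum>k\<in>Qset N. of_bool (Zk m C k = 1))"
    unfolding Xc_def by (intro sum.cong refl) (rule Zk_of_bool)
  also have "\<dots> = real (card (Kset N m C))"
    unfolding Kset_def by (rule sum_of_bool_card[OF finite_Qset])
  finally show ?thesis by simp
qed

lemma bad_circuit:
  fixes K :: "('n::finite \<Rightarrow> nat) set"
  assumes nind: "\<not> indep K" and KQ: "K \<subseteq> Qset N"
  shows "\<exists>T k0. T \<subseteq> K \<and> k0 \<in> K \<and> k0 \<notin> T \<and> 2 \<le> card T \<and> indep T \<and>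
     (\<forall>j l. odd (card {k\<in>T. l \<in> digits (k j)}) \<longleftrightarrow> l \<in> digits (k0 j))"
proof -
  have finK: "finite K" using KQ finite_subset_Q by blast
  define P where "P = (\<lambda>U. U \<subseteq> K \<and> U \<noteq> {} \<and> (\<forall>j l. even (card {k\<in>U. l \<in> digits (k j)})))"
  have "\<exists>U. P U" using nind unfolding indep_def P_def by blast
  then obtain U where PU: "P U" and minU: "\<And>V. P V \<Longrightarrow> card U \<le> card V"
    using ex_has_least_nat[where P=P and m=card] by blast
  have UK: "U \<subseteq> K" "U \<noteq> {}" and ev: "\<And>j l. even (card {k\<in>U. l \<in> digits (k j)})"
    using PU unfolding P_def by auto
  have finU: "finite U" using UK finK finite_subset by blast
  obtain k0 where k0: "k0 \<in> U" using UK by auto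
  define T where "T = U - {k0}"
  have finT: "finite T" using finU by (simp add: T_def)
  have par: "odd (card {k\<in>T. l \<in> digits (k j)}) \<longleftrightarrow> l \<in> digits (k0 j)" for j l
  proof -
    have "{k\<in>U. l \<in> digits (k j)} = {k\<in>T. l \<in> digits (k j)} \<union> (if l \<in> digits (k0 j) then {k0} else {})"
      using k0 by (auto simp: T_def)
    then have "card {k\<in>U. l \<in> digits (k j)} = card {k\<in>T. l \<in> digits (k j)} + (if l \<in> digits (k0 j) then 1 else 0)"
      using finT by (auto simp: T_def card_insert_if)
    then show ?thesis using ev[of l j] by auto
  qed
  have indT: "indep T" unfolding indep_def
  proof (intro allI impI)
    fix V assume V1: "V \<subseteq> T" and V2: "V \<noteq> {}"
    note V = V1 V2
    show "\<exists>j l. odd (card {k\<in>V. l \<in> digits (k j)})"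
    proof (rule ccontr)
      assume "\<not> (\<exists>j l. odd (card {k\<in>V. l \<in> digits (k j)}))"
      then have "P V" using V UK unfolding P_def T_def by auto
      then have "card U \<le> card V" by (rule minU)
      moreover have "V \<subset> U" using V k0 unfolding T_def by blast
      then have "card V < card U" using finU by (intro psubset_card_mono) 
      ultimately show False by simp
    qed
  qed
  have k0Q: "k0 \<in> Qset N" using k0 UK KQ by auto
  have card2: "2 \<le> card T"
  proof (rule ccontr)
    assume "\<not> 2 \<le> card T"
    then have "card T = 0 \<or> card T = 1" by auto
    then show False
    proof
      assume "card T = 0"
      then have "T = {}" using finT by simp
      then have "\<And>j. digits (k0 j) = {}" using par by auto
      then have "k0 = (\<lambda>_. 0)" by (auto simp: digits_empty_iff)
      then show False using k0Q by (simp add: Qset_def)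
    next
      assume "card T = 1"
      then obtain k1 where T1: "T = {k1}" by (auto simp: card_Suc_eq)
      then have "k1 \<noteq> k0" by (auto simp: T_def)
      have "\<And>j l. l \<in> digits (k1 j) \<longleftrightarrow> l \<in> digits (k0 j)"
      proof -
        fix j l
        have "{k\<in>T. l \<in> digits (k j)} = (if l \<in> digits (k1 j) then {k1} else {})"
          using T1 by auto
        then have "card {k\<in>T. l \<in> digits (k j)} = (if l \<in> digits (k1 j) then 1 else 0)"
          by simp
        then show "l \<in> digits (k1 j) \<longleftrightarrow> l \<in> digits (k0 j)" using par[of l j]
          by (cases "l \<in> digits (k1 j)") auto
      qed
      then have "\<And>j. k1 j = k0 j" using digits_inj by blast
      then show False using \<open>k1 \<noteq> k0\<close> by auto
    qed
  qed
  have "T \<subseteq> K" "k0 \<in> K" "k0 \<notin> T" using UK k0 unfolding T_def by auto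
  then show ?thesis
    using indT card2 par by blast
qed


definition Tq :: "nat \<Rightarrow> nat \<Rightarrow> ('n::finite kvec) set set" where
  "Tq N q = {T. T \<subseteq> Qset N \<and> card T = q \<and> indep T \<and>
     (\<exists>k0\<in>Qset N. \<forall>j l. odd (card {k\<in>T. l \<in> digits (k j)}) \<longleftrightarrow> l \<in> digits (k0 j))}"

lemma finite_Tq: "finite (Tq N q :: 'n::finite kvec set set)"
proof -
  have "Tq N q \<subseteq> Pow (Qset N :: 'n kvec set)" by (auto simp: Tq_def)
  then show ?thesis by (rule finite_subset) simp
qed

lemma card_Tq_le:
  "card (Tq N q :: 'n::finite kvec set set) \<le> card {ks \<in> PiE {..<q} (\<lambda>_. Qset N :: 'n kvec set). xorsum q ks \<in> Qset N}"
proof -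
  let ?P = "PiE {..<q} (\<lambda>_. Qset N :: 'n kvec set)"
  define e where "e = (\<lambda>T :: 'n kvec set. SOME ks. ks \<in> ?P \<and> bij_betw ks {..<q} T)"
  have e: "e T \<in> ?P \<and> bij_betw (e T) {..<q} T" if T: "T \<in> Tq N q" for T
  proof -
    have TQ: "T \<subseteq> Qset N" and cT: "card T = q" using T by (auto simp: Tq_def)
    have finT: "finite T" using TQ finite_subset_Q by blast
    obtain h where h: "bij_betw h {0..<card T} T" using ex_bij_betw_nat_finite[OF finT] by blast
    then have h': "bij_betw h {..<q} T" using cT by (simp add: atLeast0LessThan)
    have "bij_betw (restrict h {..<q}) {..<q} T"
      using h' by (rule bij_betw_cong[THEN iffD1, rotated]) simp
    moreover have "restrict h {..<q} \<in> ?P"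
      using h' TQ by (auto simp: bij_betw_def)
    ultimately have "\<exists>ks. ks \<in> ?P \<and> bij_betw ks {..<q} T" by blast
    then show ?thesis unfolding e_def by (rule someI_ex)
  qed
  show ?thesis
  proof (rule card_inj_on_le)
    show "inj_on e (Tq N q)"
    proof (rule inj_onI)
      fix T T' assume "T \<in> Tq N q" "T' \<in> Tq N q" "e T = e T'"
      then have "T = e T ` {..<q}" "T' = e T' ` {..<q}" using e[of T] e[of T'] by (auto simp: bij_betw_def)
      then show "T = T'" using \<open>e T = e T'\<close> by simp
    qed
    show "e ` Tq N q \<subseteq> {ks \<in> ?P. xorsum q ks \<in> Qset N}"
    proof
      fix ks assume "ks \<in> e ` Tq N q"
      then obtain T where T: "T \<in> Tq N q" and ks: "ks = e T" by blast
      obtain k0 where k0: "k0 \<in> Qset N" and par: "\<And>j l. odd (card {k\<in>T. l \<in> digits (k j)}) \<longleftrightarrow> l \<in> digits (k0 j)"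
        using T unfolding Tq_def by blast
      have "xorsum q ks = k0" using e[OF T] par unfolding ks by (intro xorsum_eq) auto
      then show "ks \<in> {ks \<in> ?P. xorsum q ks \<in> Qset N}" using e[OF T] k0 ks by auto
    qed
    have "finite ?P" by (intro finite_PiE) auto
    then show "finite {ks \<in> ?P. xorsum q ks \<in> Qset N}" by simp
  qed
qed

lemma bad_count:
  fixes a :: real
  assumes a: "a > 0" and mu: "real (card (Qset N :: 'n::finite kvec set)) / 2 ^ m \<le> a"
  shows "real (card {C \<in> (Cspace N m :: 'n cmat set). \<not> indep (Kset N m C)})
     \<le> real (card (Cspace N m :: 'n cmat set)) / a
       + real (card (Cspace N m :: 'n cmat set)) *
         (\<Sum>q\<in>{2..nat \<lfloor>2 * a\<rfloor>}. real (card (Tq N q :: 'n kvec set set)) / 2 ^ (q * m))"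
proof -
  let ?CS = "Cspace N m :: 'n cmat set"
  let ?Q = "Qset N :: 'n kvec set"
  let ?M = "nat \<lfloor>2 * a\<rfloor>"
  define TT where "TT = (\<Union>q\<in>{2..?M}. Tq N q :: 'n kvec set set)"
  have finTT: "finite TT" unfolding TT_def using finite_Tq by blast
  define A1 where "A1 = {C\<in>?CS. Xc N m C > 2 * a}"
  have sub: "{C \<in> ?CS. \<not> indep (Kset N m C)} \<subseteq> A1 \<union> (\<Union>T\<in>TT. {C\<in>?CS. \<forall>k\<in>T. Zk m C k = 1})"
  proof
    fix C assume C: "C \<in> {C \<in> ?CS. \<not> indep (Kset N m C)}"
    show "C \<in> A1 \<union> (\<Union>T\<in>TT. {C\<in>?CS. \<forall>k\<in>T. Zk m C k = 1})"
    proof (cases "Xc N m C > 2 * a")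
      case True then show ?thesis using C by (simp add: A1_def)
    next
      case False
      have KQ: "Kset N m C \<subseteq> ?Q" by (auto simp: Kset_def)
      obtain T k0 where T: "T \<subseteq> Kset N m C" "k0 \<in> Kset N m C" "k0 \<notin> T" "2 \<le> card T" "indep T"
        and par: "\<forall>j l. odd (card {k\<in>T. l \<in> digits (k j)}) \<longleftrightarrow> l \<in> digits (k0 j)"
        using bad_circuit[OF _ KQ] C by blast
      have finK: "finite (Kset N m C)" using KQ finite_subset_Q by blast
      have finT: "finite T" using T(1) finK finite_subset by blast
      have "card (insert k0 T) \<le> card (Kset N m C)" using T finK by (intro card_mono) auto
      then have "card T + 1 \<le> card (Kset N m C)" using T(3) finT by simp
      then have "real (card T) + 1 \<le> Xc N m C" using card_Kset[of N m C] by linarith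
      then have "real (card T) \<le> 2 * a" using False by linarith
      then have "card T \<le> ?M" by linarith
      then have "T \<in> TT" unfolding TT_def Tq_def using T par KQ by auto
      moreover have "\<forall>k\<in>T. Zk m C k = 1" using T(1) by (auto simp: Kset_def)
      ultimately show ?thesis using C by blast
    qed
  qed
  have "real (card {C \<in> ?CS. \<not> indep (Kset N m C)}) \<le> real (card (A1 \<union> (\<Union>T\<in>TT. {C\<in>?CS. \<forall>k\<in>T. Zk m C k = 1})))"
  proof -
    have "finite (A1 \<union> (\<Union>T\<in>TT. {C\<in>?CS. \<forall>k\<in>T. Zk m C k = 1}))"
      by (rule finite_subset[OF _ finite_Cspace[of N m]]) (auto simp: A1_def)
    then show ?thesis using sub by (intro of_nat_mono card_mono)
  qed
  also have "\<dots> \<le> real (card A1) + real (card (\<Union>T\<in>TT. {C\<in>?CS. \<forall>k\<in>T. Zk m C k = 1}))"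
    using card_Un_le[of A1 "\<Union>T\<in>TT. {C\<in>?CS. \<forall>k\<in>T. Zk m C k = 1}"] by (simp flip: of_nat_add)
  also have "real (card (\<Union>T\<in>TT. {C\<in>?CS. \<forall>k\<in>T. Zk m C k = 1})) \<le> (\<Sum>T\<in>TT. real (card {C\<in>?CS. \<forall>k\<in>T. Zk m C k = 1}))"
    using card_UN_le[OF finTT, of "\<lambda>T. {C\<in>?CS. \<forall>k\<in>T. Zk m C k = 1}"] by (simp flip: of_nat_sum)
  also have "\<dots> = (\<Sum>T\<in>TT. real (card ?CS) / 2 ^ (card T * m))"
  proof (intro sum.cong refl)
    fix T assume "T \<in> TT"
    then have "T \<subseteq> ?Q" "indep T" unfolding TT_def Tq_def by auto
    then show "real (card {C\<in>?CS. \<forall>k\<in>T. Zk m C k = 1}) = real (card ?CS) / 2 ^ (card T * m)"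
      using count_C[of T N m] by (simp add: field_simps)
  qed
  also have "\<dots> = (\<Sum>q\<in>{2..?M}. \<Sum>T\<in>(Tq N q :: 'n kvec set set). real (card ?CS) / 2 ^ (card T * m))"
    unfolding TT_def
  proof (rule sum.UNION_disjoint)
    show "finite {2..?M}" by simp
    show "\<forall>q\<in>{2..?M}. finite (Tq N q :: 'n kvec set set)" using finite_Tq by blast
    show "\<forall>q\<in>{2..?M}. \<forall>q'\<in>{2..?M}. q \<noteq> q' \<longrightarrow> Tq N q \<inter> (Tq N q' :: 'n kvec set set) = {}"
      by (auto simp: Tq_def)
  qed
  also have "\<dots> = (\<Sum>q\<in>{2..?M}. real (card (Tq N q :: 'n kvec set set)) * (real (card ?CS) / 2 ^ (q * m)))"
  proof (intro sum.cong refl)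
    fix q
    have "(\<Sum>T\<in>(Tq N q :: 'n kvec set set). real (card ?CS) / 2 ^ (card T * m)) = (\<Sum>T\<in>(Tq N q :: 'n kvec set set). real (card ?CS) / 2 ^ (q * m))"
      by (intro sum.cong refl) (auto simp: Tq_def)
    then show "(\<Sum>T\<in>(Tq N q :: 'n kvec set set). real (card ?CS) / 2 ^ (card T * m)) = real (card (Tq N q :: 'n kvec set set)) * (real (card ?CS) / 2 ^ (q * m))"
      by simp
  qed
  also have "\<dots> = real (card ?CS) * (\<Sum>q\<in>{2..?M}. real (card (Tq N q :: 'n kvec set set)) / 2 ^ (q * m))"
    unfolding sum_distrib_left by (intro sum.cong refl) simp
  finally have 1: "real (card {C \<in> ?CS. \<not> indep (Kset N m C)}) \<le> real (card A1) + real (card ?CS) * (\<Sum>q\<in>{2..?M}. real (card (Tq N q :: 'n kvec set set)) / 2 ^ (q * m))"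
    by linarith
  have "real (card A1) * a \<le> real (card ?CS)" unfolding A1_def by (rule chebyshev_count[OF a mu])
  then have "real (card A1) \<le> real (card ?CS) / a" using a by (simp add: field_simps)
  then show ?thesis using 1 by linarith
qed


type_synonym 'n dmat = "'n \<Rightarrow> nat \<Rightarrow> bool"

lemma SUM_restrict:
  fixes w :: "'n::finite kvec \<Rightarrow> real"
  shows "(\<Sum>k\<in>Qset N. Zk m C k * v k * w k) = (\<Sum>k\<in>Kset N m C. v k * w k)"
proof -
  have "(\<Sum>k\<in>Kset N m C. v k * w k) = (\<Sum>k\<in>Qset N. if Zk m C k = 1 then v k * w k else 0)"
    unfolding Kset_def by (rule sum.inter_filter[OF finite_Qset])
  also have "\<dots> = (\<Sum>k\<in>Qset N. Zk m C k * v k * w k)"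
    by (intro sum.cong refl) (use Zk_01[of m C] in auto)
  finally show ?thesis by simp
qed

lemma good_D:
  fixes K :: "'n::finite kvec set"
  assumes KQ: "K \<subseteq> Qset N" and ind: "indep K"
  shows "real (card {D\<in>(Dspace N :: 'n dmat set). g (restrict (\<lambda>k. Sk D k) K)}) * 2 ^ card K
       = real (card (Dspace N :: 'n dmat set)) * real (card {v \<in> PiE K (\<lambda>_. {-1,1}). g v})"
proof (rule dist_from_fourier[where X="Dspace N" and K=K and Y="\<lambda>D k. Sk D k"])
  show "finite (Dspace N :: 'n dmat set)" by (rule finite_Dspace)
  show "finite K" using KQ finite_subset_Q by blast
  show "\<And>x k. Sk x k = -1 \<or> Sk x k = 1" by (simp add: Sk_par par_pm)
next
  fix U assume U: "U \<subseteq> K" "U \<noteq> {}"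
  then obtain j0 l0 where odd: "odd (card {k\<in>U. l0 \<in> digits (k j0)})"
    using ind unfolding indep_def by blast
  then have "{k\<in>U. l0 \<in> digits (k j0)} \<noteq> {}" by (metis card.empty even_zero)
  then obtain k2 where k2: "k2 \<in> U" "l0 \<in> digits (k2 j0)" by auto
  have k2Q: "k2 \<in> Qset N" using k2 U KQ by auto
  have l0: "1 \<le> l0" "l0 \<le> N" using k2 digits_ge1 Qset_digit_le[OF k2Q] by auto
  have finU: "finite U" using U KQ finite_subset_Q by blast
  show "(\<Sum>D\<in>(Dspace N :: 'n dmat set). \<Prod>k\<in>U. Sk D k) = 0"
  proof (rule sum_zero_involution[where X="Dspace N" and g="flipD j0 l0"])
    show "finite (Dspace N :: 'n dmat set)" by (rule finite_Dspace)
    show "\<And>D. D \<in> Dspace N \<Longrightarrow> flipD j0 l0 D \<in> Dspace N" using flipD_Dspace l0 by blast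
    show "\<And>D. D \<in> Dspace N \<Longrightarrow> flipD j0 l0 (flipD j0 l0 D) = D" by simp
    fix D :: "'n dmat"
    have "(\<Prod>k\<in>U. Sk (flipD j0 l0 D) k) = (\<Prod>k\<in>U. if k \<in> {k. l0 \<in> digits (k j0)} then - Sk D k else Sk D k)"
      by (intro prod.cong refl) (simp add: Sk_flipD)
    also have "\<dots> = (-1) ^ card (U \<inter> {k. l0 \<in> digits (k j0)}) * (\<Prod>k\<in>U. Sk D k)"
      by (rule prod_flip[OF finU])
    also have "U \<inter> {k. l0 \<in> digits (k j0)} = {k\<in>U. l0 \<in> digits (k j0)}" by auto
    finally show "(\<Prod>k\<in>U. Sk (flipD j0 l0 D) k) = - (\<Prod>k\<in>U. Sk D k)" using odd by simp
  qed
qed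

lemma good_S:
  fixes K :: "'n::finite kvec set"
  assumes KQ: "K \<subseteq> Qset N"
  shows "real (card {S\<in>(Sspace N :: ('n kvec \<Rightarrow> real) set). g (restrict (\<lambda>k. S k) K)}) * 2 ^ card K
       = real (card (Sspace N :: ('n kvec \<Rightarrow> real) set)) * real (card {v \<in> PiE K (\<lambda>_. {-1,1}). g v})"
proof (rule dist_from_fourier[where X="Sspace N" and K=K and Y="\<lambda>S k. S k"])
  show "finite (Sspace N :: ('n kvec \<Rightarrow> real) set)" by (rule finite_Sspace)
  show "finite K" using KQ finite_subset_Q by blast
  show "\<And>x k. x \<in> Sspace N \<Longrightarrow> k \<in> K \<Longrightarrow> x k = -1 \<or> x k = 1"
    using KQ by (auto simp: Sspace_def PiE_def Pi_def)
next
  fix U assume U: "U \<subseteq> K" "U \<noteq> {}"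
  then obtain k0 where k0: "k0 \<in> U" by auto
  have k0Q: "k0 \<in> Qset N" using k0 U KQ by auto
  have finU: "finite U" using U KQ finite_subset_Q by blast
  show "(\<Sum>S\<in>(Sspace N :: ('n kvec \<Rightarrow> real) set). \<Prod>k\<in>U. S k) = 0"
  proof (rule sum_zero_involution[where X="Sspace N" and g="\<lambda>S. S(k0 := - S k0)"])
    show "finite (Sspace N :: ('n kvec \<Rightarrow> real) set)" by (rule finite_Sspace)
    show "\<And>S. S \<in> Sspace N \<Longrightarrow> S(k0 := - S k0) \<in> Sspace N"
      using k0Q by (auto simp: Sspace_def PiE_def Pi_def extensional_def)
    show "\<And>S. S \<in> Sspace N \<Longrightarrow> (S(k0 := - S k0))(k0 := - (S(k0 := - S k0)) k0) = S" by simp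
    fix S :: "'n kvec \<Rightarrow> real"
    have "(\<Prod>k\<in>U. (S(k0 := - S k0)) k) = (\<Prod>k\<in>U. if k \<in> {k0} then - S k else S k)"
      by (intro prod.cong refl) simp
    also have "\<dots> = (-1) ^ card (U \<inter> {k0}) * (\<Prod>k\<in>U. S k)"
      by (rule prod_flip[OF finU])
    also have "U \<inter> {k0} = {k0}" using k0 by auto
    finally show "(\<Prod>k\<in>U. (S(k0 := - S k0)) k) = - (\<Prod>k\<in>U. S k)" by simp
  qed
qed

lemma good_eq:
  fixes K :: "'n::finite kvec set"
  assumes KQ: "K \<subseteq> Qset N" and ind: "indep K"
  shows "real (card {D\<in>(Dspace N :: 'n dmat set). g (restrict (\<lambda>k. Sk D k) K)}) * real (card (Sspace N :: ('n kvec \<Rightarrow> real) set))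
       = real (card (Dspace N :: 'n dmat set)) * real (card {S\<in>(Sspace N :: ('n kvec \<Rightarrow> real) set). g (restrict (\<lambda>k. S k) K)})"
proof -
  define V where "V = real (card {v \<in> PiE K (\<lambda>_. {-1::real,1}). g v})"
  define X where "X = real (card {D\<in>(Dspace N :: 'n dmat set). g (restrict (\<lambda>k. Sk D k) K)})"
  define Y where "Y = real (card {S\<in>(Sspace N :: ('n kvec \<Rightarrow> real) set). g (restrict (\<lambda>k. S k) K)})"
  define DS where "DS = real (card (Dspace N :: 'n dmat set))"
  define SS where "SS = real (card (Sspace N :: ('n kvec \<Rightarrow> real) set))"
  define P where "P = (2::real) ^ card K"
  have 1: "X * P = DS * V" unfolding X_def P_def DS_def V_def by (rule good_D[OF KQ ind])
  have 2: "Y * P = SS * V" unfolding Y_def P_def SS_def V_def by (rule good_S[OF KQ])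
  have p: "P > 0" by (simp add: P_def)
  have "(X * SS) * P = (X * P) * SS" by (simp only: mult_ac)
  also have "\<dots> = DS * V * SS" by (simp only: 1)
  also have "\<dots> = DS * (SS * V)" by (simp only: mult_ac)
  also have "\<dots> = DS * (Y * P)" by (simp only: 2)
  also have "\<dots> = (DS * Y) * P" by (simp only: mult_ac)
  finally have "X * SS = DS * Y" using p by simp
  then show ?thesis unfolding X_def Y_def DS_def SS_def .
qed

lemma SUM1_eq: "SUM1 f N m (C, D, S) = (\<Sum>k\<in>Kset N m C. Sk D k * walsh_coeff f k)"
  unfolding SUM1_def by (simp add: SUM_restrict[where v="\<lambda>k. Sk D k"])

lemma SUM1'_eq: "SUM1' f N m (C, D, S) = (\<Sum>k\<in>Kset N m C. S k * walsh_coeff f k)"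
  unfolding SUM1'_def by (simp add: SUM_restrict[where v="\<lambda>k. S k"])

definition badset :: "nat \<Rightarrow> nat \<Rightarrow> 'n::finite cmat set" where
  "badset N m = {C \<in> Cspace N m. \<not> indep (Kset N m C)}"

lemma prob_diff:
  fixes f :: "real^'n::finite \<Rightarrow> real"
  shows "\<bar>measure_pmf.prob (map_pmf (SUM1 f N m) (Omega N m)) A - measure_pmf.prob (map_pmf (SUM1' f N m) (Omega N m)) A\<bar>
     \<le> real (card (badset N m :: 'n cmat set)) / real (card (Cspace N m :: 'n cmat set))"
proof -
  let ?CS = "Cspace N m :: 'n cmat set"
  let ?DS = "Dspace N :: 'n dmat set"
  let ?SS = "Sspace N :: ('n kvec \<Rightarrow> real) set"
  let ?O = "?CS \<times> ?DS \<times> ?SS"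
  let ?w = "walsh_coeff f"
  define a where "a = (\<lambda>C. card {D\<in>?DS. (\<Sum>k\<in>Kset N m C. Sk D k * ?w k) \<in> A})"
  define b where "b = (\<lambda>C. card {S\<in>?SS. (\<Sum>k\<in>Kset N m C. S k * ?w k) \<in> A})"
  have fC: "finite ?CS" by (rule finite_Cspace)
  have fD: "finite ?DS" by (rule finite_Dspace)
  have fS: "finite ?SS" by (rule finite_Sspace)
  have finO: "finite ?O" using fC fD fS by blast
  have neO: "?O \<noteq> {}" using Cspace_ne Dspace_ne Sspace_ne by blast
  have cardO: "card ?O = card ?CS * (card ?DS * card ?SS)" by (simp add: card_cartesian_product)
  have e1: "?O \<inter> SUM1 f N m -` A = Sigma ?CS (\<lambda>C. {D\<in>?DS. (\<Sum>k\<in>Kset N m C. Sk D k * ?w k) \<in> A} \<times> ?SS)"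
    by (auto simp: SUM1_eq)
  have e2: "?O \<inter> SUM1' f N m -` A = Sigma ?CS (\<lambda>C. ?DS \<times> {S\<in>?SS. (\<Sum>k\<in>Kset N m C. S k * ?w k) \<in> A})"
    by (auto simp: SUM1'_eq)
  have c1: "card (?O \<inter> SUM1 f N m -` A) = (\<Sum>C\<in>?CS. a C * card ?SS)"
    unfolding e1 a_def using fC fD fS
    by (subst card_SigmaI) (auto simp: card_cartesian_product)
  have c2: "card (?O \<inter> SUM1' f N m -` A) = (\<Sum>C\<in>?CS. card ?DS * b C)"
    unfolding e2 b_def using fC fD fS
    by (subst card_SigmaI) (auto simp: card_cartesian_product)
  have P1: "measure_pmf.prob (map_pmf (SUM1 f N m) (Omega N m)) A = real (card (?O \<inter> SUM1 f N m -` A)) / real (card ?O)"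
    unfolding Omega_def measure_map_pmf by (rule measure_pmf_of_set[OF neO finO])
  have P2: "measure_pmf.prob (map_pmf (SUM1' f N m) (Omega N m)) A = real (card (?O \<inter> SUM1' f N m -` A)) / real (card ?O)"
    unfolding Omega_def measure_map_pmf by (rule measure_pmf_of_set[OF neO finO])
  have aC: "a C \<le> card ?DS" for C unfolding a_def by (intro card_mono finite_Dspace) auto
  have bC: "b C \<le> card ?SS" for C unfolding b_def by (intro card_mono finite_Sspace) auto
  have diff: "\<bar>real (a C * card ?SS) - real (card ?DS * b C)\<bar> \<le> (if C \<in> badset N m then real (card ?DS * card ?SS) else 0)"
    if C: "C \<in> ?CS" for C
  proof (cases "C \<in> badset N m")
    case True
    have "real (a C * card ?SS) \<le> real (card ?DS * card ?SS)" using aC by (intro of_nat_mono mult_right_mono) auto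
    moreover have "real (card ?DS * b C) \<le> real (card ?DS * card ?SS)" using bC by (intro of_nat_mono mult_left_mono) auto
    moreover have "0 \<le> real (a C * card ?SS)" "0 \<le> real (card ?DS * b C)" by simp_all
    ultimately show ?thesis using True by (simp only: if_True abs_le_iff) linarith
  next
    case False
    then have ind: "indep (Kset N m C)" using C by (simp add: badset_def)
    have KQ: "Kset N m C \<subseteq> Qset N" by (auto simp: Kset_def)
    have "real (card {D\<in>?DS. (\<lambda>v. (\<Sum>k\<in>Kset N m C. v k * ?w k) \<in> A) (restrict (\<lambda>k. Sk D k) (Kset N m C))}) * real (card ?SS)
       = real (card ?DS) * real (card {S\<in>?SS. (\<lambda>v. (\<Sum>k\<in>Kset N m C. v k * ?w k) \<in> A) (restrict (\<lambda>k. S k) (Kset N m C))})"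
      by (rule good_eq[OF KQ ind])
    then have "real (a C) * real (card ?SS) = real (card ?DS) * real (b C)"
      unfolding a_def b_def by simp
    then show ?thesis using False by simp
  qed
  have "\<bar>measure_pmf.prob (map_pmf (SUM1 f N m) (Omega N m)) A - measure_pmf.prob (map_pmf (SUM1' f N m) (Omega N m)) A\<bar>
      = \<bar>(\<Sum>C\<in>?CS. real (a C * card ?SS) - real (card ?DS * b C))\<bar> / real (card ?O)"
    unfolding P1 P2 c1 c2 by (simp add: sum_subtractf diff_divide_distrib[symmetric])
  also have "\<dots> \<le> (\<Sum>C\<in>?CS. \<bar>real (a C * card ?SS) - real (card ?DS * b C)\<bar>) / real (card ?O)"
    by (intro divide_right_mono sum_abs) auto
  also have "\<dots> \<le> (\<Sum>C\<in>?CS. if C \<in> badset N m then real (card ?DS * card ?SS) else 0) / real (card ?O)"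
    by (intro divide_right_mono sum_mono diff) auto
  also have "(\<Sum>C\<in>?CS. if C \<in> badset N m then real (card ?DS * card ?SS) else 0) = real (card (badset N m :: 'n cmat set)) * real (card ?DS * card ?SS)"
  proof -
    have "(\<Sum>C\<in>?CS. if C \<in> badset N m then real (card ?DS * card ?SS) else 0) = (\<Sum>C\<in>{C\<in>?CS. C \<in> badset N m}. real (card ?DS * card ?SS))"
      by (rule sum.inter_filter[OF finite_Cspace, symmetric])
    also have "{C\<in>?CS. C \<in> badset N m} = badset N m" by (auto simp: badset_def)
    finally show ?thesis by simp
  qed
  also have "real (card (badset N m :: 'n cmat set)) * real (card ?DS * card ?SS) / real (card ?O) = real (card (badset N m :: 'n cmat set)) / real (card ?CS)"
  proof -
    have "card ?DS > 0" using finite_Dspace Dspace_ne by (metis card_gt_0_iff empty_iff)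
    moreover have "card ?SS > 0" using finite_Sspace Sspace_ne by (metis card_gt_0_iff empty_iff)
    ultimately show ?thesis unfolding cardO by (simp add: field_simps)
  qed
  finally show ?thesis .
qed


lemma exp_diff_ge:
  fixes u :: real assumes u: "0 \<le> u"
  shows "2 * u \<le> exp u - exp (- u)"
proof -
  let ?f = "\<lambda>x::real. exp x - exp (- x) - 2 * x"
  have "?f 0 \<le> ?f u"
  proof (rule DERIV_nonneg_imp_nondecreasing[OF u])
    fix x :: real
    have d: "DERIV ?f x :> exp x + exp (- x) - 2"
      by (auto intro!: derivative_eq_intros)
    have "exp x * exp (- x) = 1" by (simp add: exp_minus)
    moreover have "0 \<le> (exp x - 1) * (exp x - 1)" by simp
    ultimately have "2 * exp x \<le> exp x * exp x + 1" by (simp add: algebra_simps)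
    then have "2 \<le> exp x + exp (- x)"
      by (simp add: exp_minus field_simps)
    then show "\<exists>y. DERIV ?f x :> y \<and> 0 \<le> y" using d by auto
  qed
  then show ?thesis by simp
qed

lemma ln1p_sums:
  fixes y :: real assumes y: "0 \<le> y" "y < 1"
  shows "(\<lambda>n. (y ^ n - y ^ (2 * n)) / real n) sums ln (1 + y)"
proof -
  have a: "(\<lambda>n. - ((-(-y))^n) / real n) sums ln (1 + (-y))"
    by (rule ln_series') (use y in auto)
  have b: "(\<lambda>n. - ((-(-(y^2)))^n) / real n) sums ln (1 + (-(y^2)))"
    by (rule ln_series') (use y in \<open>auto simp: abs_square_less_1\<close>)
  have "(\<lambda>n. - ((-(-(y^2)))^n) / real n - (- ((-(-y))^n) / real n)) sums (ln (1 + (-(y^2))) - ln (1 + (-y)))"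
    by (rule sums_diff[OF b a])
  moreover have "ln (1 + (-(y^2))) - ln (1 + (-y)) = ln (1 + y)"
  proof -
    have "1 - y^2 = (1 - y) * (1 + y)" by (simp add: power2_eq_square algebra_simps)
    then have "ln (1 - y^2) = ln (1 - y) + ln (1 + y)" using y by (simp add: ln_mult)
    then show ?thesis by simp
  qed
  moreover have "(\<lambda>n. - ((-(-(y^2)))^n) / real n - (- ((-(-y))^n) / real n)) = (\<lambda>n. (y ^ n - y ^ (2 * n)) / real n)"
    by (rule ext) (simp add: power_mult diff_divide_distrib)
  ultimately show ?thesis by simp
qed

lemma geom_diff_le:
  fixes z :: real assumes z: "0 \<le> z" "z < 1"
  shows "(\<Sum>l\<in>{1..N}. z ^ l - z ^ (2 * l)) \<le> z / (1 - z^2)"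
proof -
  have z2: "z^2 < 1" using z by (simp add: abs_square_less_1)
  have g1: "(\<lambda>l. z * z ^ l) sums (z * (1 / (1 - z)))"
    by (rule sums_mult[OF geometric_sums]) (use z in auto)
  have g2: "(\<lambda>l. z^2 * (z^2) ^ l) sums (z^2 * (1 / (1 - z^2)))"
    by (rule sums_mult[OF geometric_sums]) (use z z2 in auto)
  have g: "(\<lambda>l. z * z ^ l - z^2 * (z^2) ^ l) sums (z * (1 / (1 - z)) - z^2 * (1 / (1 - z^2)))"
    by (rule sums_diff[OF g1 g2])
  have val: "z * (1 / (1 - z)) - z^2 * (1 / (1 - z^2)) = z / (1 - z^2)"
  proof -
    have e: "1 - z^2 = (1 - z) * (1 + z)" by (simp add: power2_eq_square algebra_simps)
    have nz: "1 - z \<noteq> 0" "1 + z \<noteq> 0" using z by auto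
    have h1: "1 / (1 - z) = (1 + z) / (1 - z^2)" unfolding e using nz by simp
    have "z * (1 / (1 - z)) - z^2 * (1 / (1 - z^2)) = (z * (1 + z) - z^2) / (1 - z^2)"
      unfolding h1 by (simp add: diff_divide_distrib)
    also have "z * (1 + z) - z^2 = z" by (simp add: power2_eq_square algebra_simps)
    finally show ?thesis .
  qed
  have nn: "0 \<le> z * z ^ l - z^2 * (z^2) ^ l" for l
  proof -
    have "z^2 * (z^2)^l = z ^ (2 * Suc l)" by (simp add: power_mult[symmetric] power_add[symmetric] mult_2 )
    also have "\<dots> \<le> z ^ Suc l" using z by (intro power_decreasing) auto
    finally show ?thesis by simp
  qed
  have "(\<Sum>l\<in>{1..N}. z ^ l - z ^ (2 * l)) = (\<Sum>l<N. z * z ^ l - z^2 * (z^2) ^ l)"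
  proof -
    have "(\<Sum>l\<in>{1..N}. z ^ l - z ^ (2 * l)) = (\<Sum>l<N. z ^ Suc l - z ^ (2 * Suc l))"
      using sum.atLeast1_atMost_eq[of "\<lambda>l. z ^ l - z ^ (2 * l)" N] by simp
    also have "\<dots> = (\<Sum>l<N. z * z ^ l - z^2 * (z^2) ^ l)"
    proof (intro sum.cong refl)
      fix l
      have "z ^ (2 * Suc l) = (z^2) ^ Suc l" by (rule power_mult)
      then show "z ^ Suc l - z ^ (2 * Suc l) = z * z ^ l - z^2 * (z^2) ^ l" by (simp only: power_Suc)
    qed
    finally show ?thesis .
  qed
  also have "\<dots> \<le> (\<Sum>l. z * z ^ l - z^2 * (z^2) ^ l)"
    by (rule sum_le_suminf[OF sums_summable[OF g]]) (use nn in auto)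
  also have "\<dots> = z / (1 - z^2)" using g val by (simp add: sums_iff)
  finally show ?thesis .
qed

lemma sum_ln_bound:
  fixes t :: real assumes t: "t > 0"
  shows "(\<Sum>l\<in>{1..N}. ln (1 + exp (- t * real l))) \<le> pi^2 / (12 * t)"
proof -
  define b where "b = (\<lambda>n::nat. if n = 0 then 0 else 1 / (2 * t * (real n)^2))"
  have bs: "b sums (pi^2 / (12 * t))"
  proof -
    have "(\<lambda>n. (1 / (2 * t)) * (1 / real ((n + 1)^2))) sums ((1 / (2 * t)) * (pi^2 / 6))"
      by (rule sums_mult[OF inverse_squares_sums])
    moreover have "(\<lambda>n. b (Suc n)) = (\<lambda>n. (1 / (2 * t)) * (1 / real ((n + 1)^2)))"
      by (rule ext) (simp add: b_def add.commute)
    moreover have "(1 / (2 * t)) * (pi^2 / 6) = pi^2 / (12 * t)" by simp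
    ultimately have "(\<lambda>n. b (Suc n)) sums (pi^2 / (12 * t))" by simp
    then have "b sums (pi^2 / (12 * t) + b 0)" by (rule sums_Suc_iff[THEN iffD1])
    moreover have "b 0 = 0" by (simp add: b_def)
    ultimately show ?thesis by simp
  qed
  have each: "(\<lambda>n. (exp (- t * real l) ^ n - exp (- t * real l) ^ (2 * n)) / real n) sums ln (1 + exp (- t * real l))"
    if l: "l \<in> {1..N}" for l
  proof (rule ln1p_sums)
    show "0 \<le> exp (- t * real l)" by simp
    show "exp (- t * real l) < 1" using t l by simp
  qed
  have S: "(\<lambda>n. \<Sum>l\<in>{1..N}. (exp (- t * real l) ^ n - exp (- t * real l) ^ (2 * n)) / real n)
      sums (\<Sum>l\<in>{1..N}. ln (1 + exp (- t * real l)))"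
    by (rule sums_sum) (rule each)
  have le: "(\<Sum>l\<in>{1..N}. (exp (- t * real l) ^ n - exp (- t * real l) ^ (2 * n)) / real n) \<le> b n" for n
  proof (cases "n = 0")
    case True then show ?thesis by (simp add: b_def)
  next
    case False
    define z where "z = exp (- t * real n)"
    define u where "u = t * real n"
    have u: "u > 0" using t False by (simp add: u_def)
    have z: "0 \<le> z" "z < 1" using u by (auto simp: z_def u_def)
    have pw: "exp (- t * real l) ^ n = z ^ l" for l
      by (simp add: z_def exp_of_nat_mult[symmetric] algebra_simps flip: exp_of_nat2_mult)
    have "(\<Sum>l\<in>{1..N}. (exp (- t * real l) ^ n - exp (- t * real l) ^ (2 * n)) / real n)
        = (\<Sum>l\<in>{1..N}. z ^ l - z ^ (2 * l)) / real n"
    proof -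
      have "\<And>l. exp (- t * real l) ^ (2 * n) = z ^ (2 * l)"
        using pw by (metis mult.commute power_mult)
      then show ?thesis using pw by (simp add: sum_divide_distrib)
    qed
    also have "\<dots> \<le> (z / (1 - z^2)) / real n"
      using geom_diff_le[OF z] False by (intro divide_right_mono) auto
    also have "z / (1 - z^2) = 1 / (exp u - exp (- u))"
    proof -
      have zz: "z = exp (- u)" by (simp add: z_def u_def)
      have "exp u * exp (- u) = 1" by (simp add: exp_minus)
      moreover have "exp (-u) ^ 2 = exp (- u) * exp (- u)" by (simp add: power2_eq_square)
      moreover have "exp u - exp (- u) \<noteq> 0" using exp_diff_ge[of u] u by linarith
      moreover have "1 - exp (-u) * exp (-u) \<noteq> 0" using z zz by (metis mult_less_cancel_right2 order.strict_iff_not exp_gt_zero right_minus_eq)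
      ultimately show ?thesis unfolding zz by (simp add: field_simps)
    qed
    also have "1 / (exp u - exp (- u)) / real n \<le> 1 / (2 * u) / real n"
      using exp_diff_ge[of u] u False by (intro divide_right_mono divide_left_mono) auto
    also have "1 / (2 * u) / real n = b n" using False by (simp add: b_def u_def power2_eq_square)
    finally show ?thesis .
  qed
  show ?thesis using sums_le[OF le S bs] .
qed


lemma knorm_Dg: "knorm k = (\<Sum>p\<in>Dg k. snd p)"
  unfolding knorm_def using sum_Dg[of "\<lambda>j l. l" k] by (simp add: case_prod_unfold)

lemma Dg_inj: "Dg k = Dg k' \<Longrightarrow> k = k'"
proof
  fix j assume "Dg k = Dg k'"
  then have "\<And>l. l \<in> digits (k j) \<longleftrightarrow> l \<in> digits (k' j)" unfolding Dg_def by blast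
  then show "k j = k' j" using digits_inj by blast
qed

lemma sum_Pow_prod:
  fixes g :: "'a \<Rightarrow> real"
  assumes "finite P"
  shows "(\<Sum>S\<in>Pow P. \<Prod>p\<in>S. g p) = (\<Prod>p\<in>P. g p + 1)"
  using prod_add[OF assms, of g "\<lambda>_. 1"] by simp

lemma card_Q_bound_t:
  fixes t :: real assumes t: "t > 0"
  shows "real (card (Qset N :: 'n::finite kvec set)) \<le> exp (t * real N) * exp (real CARD('n) * pi^2 / (12 * t))"
proof -
  let ?Q = "Qset N :: 'n kvec set"
  define P where "P = (UNIV :: 'n set) \<times> {1..N}"
  have finP: "finite P" by (simp add: P_def)
  define W where "W = {S \<in> Pow P. (\<Sum>p\<in>S. snd p) \<le> N}"
  have finW: "finite W" using finP by (simp add: W_def)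
  have "Dg ` ?Q \<subseteq> W"
  proof
    fix S assume "S \<in> Dg ` ?Q"
    then obtain k where k: "k \<in> ?Q" "S = Dg k" by blast
    have "S \<subseteq> P" using k digits_ge1 Qset_digit_le[OF k(1)] by (auto simp: Dg_def P_def)
    moreover have "(\<Sum>p\<in>S. snd p) \<le> N" using k by (simp add: knorm_Dg[symmetric] Qset_def)
    ultimately show "S \<in> W" by (simp add: W_def)
  qed
  moreover have "inj_on Dg ?Q" by (meson Dg_inj inj_onI)
  ultimately have "card ?Q \<le> card W" using finW by (metis card_image card_mono)
  then have "real (card ?Q) \<le> real (card W)" by simp
  also have "real (card W) = (\<Sum>S\<in>Pow P. of_bool ((\<Sum>p\<in>S. snd p) \<le> N))"
  proof -
    have "(\<Sum>S\<in>Pow P. (of_bool ((\<Sum>p\<in>S. snd p) \<le> N) :: real)) = real (card {S\<in>Pow P. (\<Sum>p\<in>S. snd p) \<le> N})"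
      by (rule sum_of_bool_card) (simp add: finP)
    then show ?thesis by (simp add: W_def)
  qed
  also have "\<dots> \<le> (\<Sum>S\<in>Pow P. exp (t * real N) * (\<Prod>p\<in>S. exp (- t * real (snd p))))"
  proof (intro sum_mono)
    fix S assume S: "S \<in> Pow P"
    have finS: "finite S" using S finP finite_subset by auto
    have "(\<Prod>p\<in>S. exp (- t * real (snd p))) = exp (\<Sum>p\<in>S. - t * real (snd p))"
      using finS by (simp add: exp_sum)
    also have "(\<Sum>p\<in>S. - t * real (snd p)) = - t * real (\<Sum>p\<in>S. snd p)"
      by (simp add: sum_distrib_left of_nat_sum)
    finally have "exp (t * real N) * (\<Prod>p\<in>S. exp (- t * real (snd p))) = exp (t * real N) * exp (- t * real (\<Sum>p\<in>S. snd p))"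
      by simp
    also have "\<dots> = exp (t * real N + - t * real (\<Sum>p\<in>S. snd p))" by (rule exp_add[symmetric])
    finally have "exp (t * real N) * (\<Prod>p\<in>S. exp (- t * real (snd p))) = exp (t * real N + - t * real (\<Sum>p\<in>S. snd p))" .
    then have e: "exp (t * real N) * (\<Prod>p\<in>S. exp (- t * real (snd p))) = exp (t * (real N - real (\<Sum>p\<in>S. snd p)))"
      by (simp add: algebra_simps)
    show "of_bool ((\<Sum>p\<in>S. snd p) \<le> N) \<le> exp (t * real N) * (\<Prod>p\<in>S. exp (- t * real (snd p)))"
    proof (cases "(\<Sum>p\<in>S. snd p) \<le> N")
      case True
      then have "real (\<Sum>p\<in>S. snd p) \<le> real N" by (simp only: of_nat_le_iff)
      then have "0 \<le> t * (real N - real (\<Sum>p\<in>S. snd p))" using t by (intro mult_nonneg_nonneg) auto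
      then show ?thesis unfolding e using True by simp
    next
      case False then show ?thesis by (simp add: prod_nonneg)
    qed
  qed
  also have "\<dots> = exp (t * real N) * (\<Prod>p\<in>P. exp (- t * real (snd p)) + 1)"
    by (simp add: sum_distrib_left[symmetric] sum_Pow_prod[OF finP])
  also have "(\<Prod>p\<in>P. exp (- t * real (snd p)) + 1) = (\<Prod>l\<in>{1..N}. 1 + exp (- t * real l)) ^ CARD('n)"
  proof -
    have "(\<Prod>p\<in>P. exp (- t * real (snd p)) + 1) = (\<Prod>j\<in>(UNIV::'n set). \<Prod>l\<in>{1..N}. 1 + exp (- t * real l))"
      unfolding P_def by (subst prod.cartesian_product) (simp add: case_prod_unfold add.commute)
    then show ?thesis by simp
  qed
  also have "(\<Prod>l\<in>{1..N}. 1 + exp (- t * real l)) = exp (\<Sum>l\<in>{1..N}. ln (1 + exp (- t * real l)))"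
    by (simp add: exp_sum add_pos_pos)
  also have "exp (\<Sum>l\<in>{1..N}. ln (1 + exp (- t * real l))) ^ CARD('n) \<le> exp (pi^2 / (12 * t)) ^ CARD('n)"
    using sum_ln_bound[OF t, of N] by (intro power_mono) auto
  also have "exp (pi^2 / (12 * t)) ^ CARD('n) = exp (real CARD('n) * pi^2 / (12 * t))"
    by (simp add: exp_of_nat_mult[symmetric])
  finally show ?thesis by (simp add: mult_left_mono)
qed

lemma card_Q_bound:
  assumes N: "N \<ge> 1"
  shows "real (card (Qset N :: 'n::finite kvec set)) \<le> exp (pi * sqrt (real CARD('n) * real N / 3))"
proof -
  define s where "s = real CARD('n)"
  define a where "a = sqrt (s * real N / 12)"
  have s: "s > 0" by (simp add: s_def)
  have a: "a > 0" using s N by (simp add: a_def)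
  have a2: "a^2 = s * real N / 12" using s N by (simp add: a_def)
  define t where "t = pi * a / real N"
  have t: "t > 0" using a N by (simp add: t_def)
  have 1: "t * real N = pi * a" using N by (simp add: t_def)
  have 2: "s * pi^2 / (12 * t) = pi * a"
  proof -
    have "s * pi^2 / (12 * t) = pi * (s * real N / 12) / a" using N a by (simp add: t_def field_simps power2_eq_square)
    also have "\<dots> = pi * a" unfolding a2[symmetric] using a by (simp add: power2_eq_square)
    finally show ?thesis .
  qed
  have 3: "2 * a = sqrt (s * real N / 3)"
  proof -
    have "sqrt (s * real N / 3) = sqrt (4 * (s * real N / 12))" by simp
    also have "\<dots> = sqrt 4 * sqrt (s * real N / 12)" by (rule real_sqrt_mult)
    also have "\<dots> = 2 * a" by (simp add: a_def)
    finally show ?thesis by simp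
  qed
  have "real (card (Qset N :: 'n kvec set)) \<le> exp (t * real N) * exp (s * pi^2 / (12 * t))"
    using card_Q_bound_t[OF t, of N] by (simp add: s_def)
  also have "\<dots> = exp (pi * (2 * a))" unfolding 1 2 by (simp add: exp_add[symmetric] algebra_simps)
  finally show ?thesis unfolding 3 s_def .
qed


lemma digits_lt: "a < 2 ^ M \<Longrightarrow> l \<in> digits a \<Longrightarrow> l \<le> M"
proof -
  assume a: "a < 2 ^ M" and l: "l \<in> digits a"
  then have "1 \<le> l" "bit a (l - 1)" by (auto simp: digits_def)
  then have "2 ^ (l - 1) \<le> a" using bit_imp_ge by blast
  then have "(2::nat) ^ (l - 1) < 2 ^ M" using a by linarith
  then have "l - 1 < M" by simp
  then show "l \<le> M" by linarith
qed

lemma Qset_0: "Qset 0 = {}"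
proof -
  have "k \<notin> Qset 0" for k :: "'n::finite kvec"
  proof
    assume k: "k \<in> Qset 0"
    then have "k \<noteq> (\<lambda>_. 0)" by (simp add: Qset_def)
    then obtain j l where "l \<in> digits (k j)" using nonzero_has_digit by blast
    then show False using Qset_digit_le[OF k] digits_ge1 by fastforce
  qed
  then show ?thesis by auto
qed

lemma card_Q_lower:
  "real (card (Qset (M * M) :: 'n::finite kvec set)) \<ge> 2 ^ M - 1"
proof -
  obtain j0 :: 'n where True by blast
  define e where "e = (\<lambda>a::nat. (\<lambda>j::'n. if j = j0 then a else 0))"
  have inj: "inj_on e {1..<2^M}" unfolding e_def by (auto simp: inj_on_def fun_eq_iff)
  have sub: "e ` {1..<2^M} \<subseteq> Qset (M * M)"
  proof
    fix k assume "k \<in> e ` {1..<2^M}"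
    then obtain a where a: "1 \<le> a" "a < 2^M" "k = e a" by auto
    have "k \<noteq> (\<lambda>_. 0)" using a by (auto simp: e_def fun_eq_iff)
    moreover have "knorm k \<le> M * M"
    proof -
      have "knorm k = (\<Sum>j\<in>UNIV. \<Sum>l\<in>digits (k j). l)" by (simp add: knorm_def)
      also have "\<dots> = (\<Sum>l\<in>digits (k j0). l) + (\<Sum>j\<in>UNIV - {j0}. \<Sum>l\<in>digits (k j). l)"
        by (rule sum.remove) auto
      also have "(\<Sum>j\<in>UNIV - {j0}. \<Sum>l\<in>digits (k j). l) = 0"
        by (intro sum.neutral) (auto simp: a e_def)
      also have "k j0 = a" by (simp add: a e_def)
      finally have "knorm k = (\<Sum>l\<in>digits a. l)" by simp
      also have "\<dots> \<le> card (digits a) * M"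
        using sum_bounded_above[of "digits a" "\<lambda>l. l" M] digits_lt[OF a(2)] by simp
      also have "card (digits a) \<le> card {1..M}"
        using digits_lt[OF a(2)] digits_ge1 by (intro card_mono) auto
      then have "card (digits a) * M \<le> M * M" by simp
      finally show ?thesis .
    qed
    ultimately show "k \<in> Qset (M * M)" by (simp add: Qset_def)
  qed
  have "card {1..<(2::nat)^M} \<le> card (Qset (M * M) :: 'n kvec set)"
    using card_inj_on_le[OF inj sub finite_Qset] .
  moreover have "card {1..<(2::nat)^M} = 2^M - 1" by simp
  moreover have "real ((2::nat)^M - 1) = 2^M - 1" by (simp add: of_nat_diff)
  ultimately show ?thesis by (metis of_nat_le_iff)
qed

definition Sm :: "'n::finite itself \<Rightarrow> real \<Rightarrow> nat \<Rightarrow> nat set" where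
  "Sm _ c m = {N. real (card (Qset N :: ('n \<Rightarrow> nat) set)) \<le> c * real m * 2 ^ m}"

lemma Nm_Sm: "Nm TYPE('n::finite) c m = Sup (Sm TYPE('n) c m)"
  by (simp add: Nm_def Sm_def)

lemma Nm_props:
  fixes c :: real
  assumes c: "c > 0" and big: "c * real m + 1 < 2 ^ m"
  shows "real (card (Qset (Nm TYPE('n::finite) c m) :: 'n kvec set)) \<le> c * real m * 2 ^ m"
    and "Nm TYPE('n) c m < (2 * m) * (2 * m)"
    and "\<And>N. real (card (Qset N :: 'n kvec set)) \<le> c * real m * 2 ^ m \<Longrightarrow> N \<le> Nm TYPE('n) c m"
proof -
  let ?S = "Sm TYPE('n) c m"
  have bound: "N < (2 * m) * (2 * m)" if "N \<in> ?S" for N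
  proof (rule ccontr)
    assume "\<not> N < (2 * m) * (2 * m)"
    then have "Qset ((2 * m) * (2 * m)) \<subseteq> (Qset N :: 'n kvec set)" by (intro Qset_mono) simp
    then have "card (Qset ((2 * m) * (2 * m)) :: 'n kvec set) \<le> card (Qset N :: 'n kvec set)"
      by (intro card_mono) auto
    then have "2 ^ (2 * m) - 1 \<le> real (card (Qset N :: 'n kvec set))"
      using card_Q_lower[of "2 * m", where 'n='n] by linarith
    moreover have "c * real m * 2 ^ m < 2 ^ (2 * m) - 1"
    proof -
      have p: "(1::real) \<le> 2 ^ m" by simp
      have "(2::real) ^ (2 * m) = 2 ^ m * 2 ^ m" by (simp add: mult_2 power_add)
      moreover have "(c * real m + 1) * 2 ^ m < 2 ^ m * 2 ^ m" using big by simp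
      ultimately have "c * real m * 2 ^ m + 2 ^ m < 2 ^ (2 * m)" by (simp add: algebra_simps)
      then show ?thesis using p by linarith
    qed
    ultimately show False using that by (simp add: Sm_def)
  qed
  have bdd: "bdd_above ?S" using bound by (meson bdd_above.I less_imp_le)
  have fin: "finite ?S" using bound by (meson finite_nat_set_iff_bounded)
  have ne: "0 \<in> ?S" using c by (simp add: Sm_def Qset_0)
  have mem: "Sup ?S \<in> ?S" using fin ne by (metis Max_in cSup_eq_Max empty_iff)
  show "real (card (Qset (Nm TYPE('n::finite) c m) :: 'n kvec set)) \<le> c * real m * 2 ^ m"
    using mem unfolding Nm_Sm by (simp add: Sm_def)
  show "Nm TYPE('n) c m < (2 * m) * (2 * m)" using bound[OF mem] unfolding Nm_Sm .
  show "\<And>N. real (card (Qset N :: 'n kvec set)) \<le> c * real m * 2 ^ m \<Longrightarrow> N \<le> Nm TYPE('n) c m"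
    unfolding Nm_Sm by (rule cSup_upper[OF _ bdd]) (simp add: Sm_def)
qed

lemma Nm_lower:
  fixes c :: real
  assumes c: "c > 0" and big: "c * real m + 1 < 2 ^ m" and cm: "c * real m \<ge> 1"
    and N1: "lambda_const * (real m)^2 / real CARD('n) \<ge> 1"
  shows "real (Nm TYPE('n::finite) c m) \<ge> lambda_const * (real m)^2 / real CARD('n) - 1"
proof -
  define s where "s = real CARD('n)"
  have s: "s > 0" by (simp add: s_def)
  define N' where "N' = nat \<lfloor>lambda_const * (real m)^2 / s\<rfloor>"
  have N'1: "N' \<ge> 1" using N1 unfolding N'_def s_def by linarith
  define x where "x = lambda_const * (real m)^2 / s"
  have x1: "x \<ge> 1" using N1 by (simp add: x_def s_def)
  have rN: "real N' = real_of_int \<lfloor>x\<rfloor>" unfolding N'_def x_def[symmetric] using x1 by simp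
  have N'le: "real N' \<le> lambda_const * (real m)^2 / s" unfolding rN x_def[symmetric] by simp
  have N'ge: "real N' \<ge> lambda_const * (real m)^2 / s - 1" unfolding rN x_def[symmetric] by linarith
  have lam: "lambda_const = 3 * (ln 2)^2 / pi^2" by (simp add: lambda_const_def)
  have "sqrt (s * real N' / 3) \<le> real m * ln 2 / pi"
  proof -
    have "s * real N' / 3 \<le> s * (lambda_const * (real m)^2 / s) / 3"
      using N'le s by (intro divide_right_mono mult_left_mono) auto
    also have "\<dots> = (real m * ln 2 / pi)^2" using s unfolding lam by (simp add: field_simps power2_eq_square)
    finally have "sqrt (s * real N' / 3) \<le> sqrt ((real m * ln 2 / pi)^2)" by (rule real_sqrt_le_mono)
    also have "\<dots> = real m * ln 2 / pi" by simp
    finally show ?thesis .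
  qed
  then have "pi * sqrt (s * real N' / 3) \<le> real m * ln 2"
    using pi_gt_zero by (simp add: field_simps)
  then have "exp (pi * sqrt (s * real N' / 3)) \<le> exp (real m * ln 2)" by simp
  also have "exp (real m * ln 2) = 2 ^ m" by (simp add: exp_of_nat_mult)
  finally have "real (card (Qset N' :: 'n kvec set)) \<le> 2 ^ m"
    using card_Q_bound[OF N'1, where 'n='n] unfolding s_def by linarith
  also have "(2::real) ^ m \<le> c * real m * 2 ^ m" using cm by simp
  finally have "N' \<le> Nm TYPE('n) c m" by (rule Nm_props(3)[OF c big])
  then show ?thesis using N'ge unfolding s_def by linarith
qed


lemma powr_cancel_half:
  fixes q a :: real assumes q: "q > 0"
  shows "(q / 2) powr a * q powr (- a) = 2 powr (- a)"
proof -
  have "(q / 2) powr a = q powr a / 2 powr a" using q by (simp add: powr_divide)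
  moreover have "q powr a * q powr (- a) = 1" using q by (simp add: powr_add[symmetric])
  ultimately have "(q / 2) powr a * q powr (- a) = 1 / 2 powr a" by (simp add: field_simps)
  then show ?thesis by (simp add: powr_minus_divide)
qed

lemma key_claim:
  fixes c K x m :: real and q :: nat
  assumes c: "c > 0" and K: "K \<ge> 1" and m: "m \<ge> 1" and x: "0 \<le> x" and xK: "x \<le> K * m powr (3/2)"
    and q3: "3 \<le> q" and qc: "real q \<le> 2 * c * m"
    and E5: "2 * sqrt K * m powr (3/4) * ln (K * m powr (3/2)) \<le> 4 * c * m * ln (3/2)"
  shows "x ^ q \<le> (real q / 2) powr (4 * c * m)"
proof -
  define r where "r = real q / 2"
  have r: "r \<ge> 3/2" using q3 by (simp add: r_def)
  show ?thesis
  proof (cases "r^2 \<ge> x")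
    case True
    have "x ^ q \<le> (r^2) ^ q" using True x by (intro power_mono) auto
    also have "\<dots> = r ^ (2 * q)" by (simp add: power_mult)
    also have "\<dots> = r powr (real (2 * q))" by (rule powr_realpow[symmetric]) (use r in auto)
    also have "\<dots> \<le> r powr (4 * c * m)" using r qc by (intro powr_mono) auto
    finally show ?thesis by (simp add: r_def)
  next
    case False
    define L where "L = K * m powr (3/2)"
    have L1: "L \<ge> 1" unfolding L_def using K m by (metis ge_one_powr_ge_zero mult_le_cancel_left1 order.trans order_le_less zero_le_divide_iff zero_le_numeral mult_ge1_I)
    have "r < sqrt x" using False r by (metis abs_of_nonneg linorder_not_le real_less_rsqrt order_trans zero_le_divide_iff less_eq_real_def dual_order.strict_trans1 zero_less_numeral r_def)
    also have "sqrt x \<le> sqrt L" using xK by (simp add: L_def)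
    also have "sqrt L = sqrt K * m powr (3/4)"
    proof -
      have "sqrt (m powr (3/2)) = (m powr (3/2)) powr (1/2)" by (simp add: powr_half_sqrt)
      also have "\<dots> = m powr (3/4)" by (simp add: powr_powr)
      finally have "sqrt (m powr (3/2)) = m powr (3/4)" .
      then show ?thesis by (simp add: L_def real_sqrt_mult)
    qed
    finally have qlt: "real q \<le> 2 * sqrt K * m powr (3/4)" unfolding r_def by simp
    have "x ^ q \<le> L ^ q" using xK x by (intro power_mono) (auto simp: L_def)
    also have "\<dots> = L powr real q" using L1 by (simp add: powr_realpow)
    also have "\<dots> \<le> L powr (2 * sqrt K * m powr (3/4))" using L1 qlt by (intro powr_mono) auto
    also have "\<dots> = exp (2 * sqrt K * m powr (3/4) * ln L)" using L1 by (simp add: powr_def mult.commute)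
    also have "\<dots> \<le> exp (4 * c * m * ln (3/2))" using E5 by (simp add: L_def)
    also have "\<dots> = (3/2) powr (4 * c * m)" by (simp add: powr_def mult.commute)
    also have "\<dots> \<le> r powr (4 * c * m)" using r c m by (intro powr_mono2) auto
    finally show ?thesis by (simp add: r_def)
  qed
qed

lemma term_bound:
  fixes c K x y m :: real and q :: nat
  assumes c: "c > 0" and K: "K \<ge> 1" and m: "m \<ge> 1" and x: "0 \<le> x" and xK: "x \<le> K * m powr (3/2)"
    and y: "y \<ge> 4 * c * m - 1"
    and q2: "2 \<le> q" and qc: "real q \<le> 2 * c * m"
    and E5: "2 * sqrt K * m powr (3/4) * ln (K * m powr (3/2)) \<le> 4 * c * m * ln (3/2)"
  shows "x ^ q * real q powr (- y) \<le> 2 * (K^2 * m^3 + c * m) * 2 powr (- 4 * c * m)"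
proof -
  have qpos: "real q > 0" using q2 by simp
  have "real q powr (- y) \<le> real q powr (1 - 4 * c * m)"
    using q2 y by (intro powr_mono) auto
  also have "\<dots> = real q powr (1 + (- 4 * c * m))" by simp
  also have "\<dots> = real q powr 1 * real q powr (- 4 * c * m)" by (rule powr_add)
  also have "\<dots> = real q * real q powr (- 4 * c * m)" using qpos by (simp only: powr_one)
  finally have qy: "real q powr (- y) \<le> real q * real q powr (- 4 * c * m)" .
  have xq0: "0 \<le> x ^ q" using x by simp
  have t1: "x ^ q * real q powr (- y) \<le> x ^ q * (real q * real q powr (- 4 * c * m))"
    using qy xq0 by (rule mult_left_mono)
  have cm0: "0 \<le> c * m" using c m by simp
  have P: "0 < (2::real) powr (- 4 * c * m)" by simp
  show ?thesis
  proof (cases "q = 2")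
    case True
    have "x ^ 2 \<le> (K * m powr (3/2)) ^ 2" using x xK by (intro power_mono) auto
    also have "\<dots> = K^2 * m^3"
    proof -
      have "(m powr (3/2))^2 = (m powr (3/2)) powr (real 2)" by (rule powr_realpow[symmetric]) (use m in simp)
      also have "\<dots> = m powr (real 3)" by (simp add: powr_powr)
      also have "\<dots> = m^3" by (rule powr_realpow) (use m in simp)
      finally show ?thesis by (simp add: power_mult_distrib)
    qed
    finally have x2: "x^2 \<le> K^2 * m^3" .
    have "x ^ q * real q powr (- y) \<le> x^2 * (2 * 2 powr (- 4 * c * m))" using t1 True by simp
    also have "\<dots> \<le> K^2 * m^3 * (2 * 2 powr (- 4 * c * m))" using x2 P by (intro mult_right_mono) auto
    also have "\<dots> \<le> 2 * (K^2 * m^3 + c * m) * 2 powr (- 4 * c * m)"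
      using mult_nonneg_nonneg[OF cm0 less_imp_le[OF P]] by (simp add: algebra_simps)
    finally show ?thesis .
  next
    case False
    then have q3: "3 \<le> q" using q2 by simp
    have cl: "x ^ q \<le> (real q / 2) powr (4 * c * m)" by (rule key_claim[OF c K m x xK q3 qc E5])
    have "x ^ q * real q powr (- y) \<le> x ^ q * (real q * real q powr (- 4 * c * m))" by (rule t1)
    also have "\<dots> \<le> (real q / 2) powr (4 * c * m) * (real q * real q powr (- 4 * c * m))"
      using cl qpos by (intro mult_right_mono) auto
    also have "\<dots> = real q * ((real q / 2) powr (4 * c * m) * real q powr (- (4 * c * m)))" by simp
    also have "\<dots> = real q * 2 powr (- (4 * c * m))" using powr_cancel_half[OF qpos] by simp
    also have "\<dots> \<le> 2 * c * m * 2 powr (- (4 * c * m))" using qc by (intro mult_right_mono) auto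
    also have "\<dots> \<le> 2 * (K^2 * m^3 + c * m) * 2 powr (- 4 * c * m)"
    proof -
      have "0 \<le> K^2 * m^3 * 2 powr (- 4 * c * m)" using m P by simp
      then show ?thesis by (simp add: algebra_simps)
    qed
    finally show ?thesis .
  qed
qed


lemma Qset_ne: "N \<ge> 1 \<Longrightarrow> Qset N \<noteq> ({} :: 'n::finite kvec set)"
proof -
  assume N: "N \<ge> 1"
  have "real (card (Qset (1 * 1) :: 'n kvec set)) \<ge> 2 ^ 1 - 1" by (rule card_Q_lower)
  then have "1 \<le> card (Qset 1 :: 'n kvec set)" by simp
  then have "Qset 1 \<noteq> ({} :: 'n kvec set)" by (metis card.empty not_one_le_zero)
  moreover have "Qset 1 \<subseteq> (Qset N :: 'n kvec set)" using N by (rule Qset_mono)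
  ultimately show ?thesis by auto
qed

lemma Xq_bound:
  fixes A B :: real
  assumes xb: "xor_bound TYPE('n::finite) A B" and N: "N \<ge> 1" and q: "q \<ge> 2"
  shows "real (card {ks \<in> PiE {..<q} (\<lambda>_. Qset N :: 'n kvec set). xorsum q ks \<in> Qset N})
     \<le> real (card (Qset N :: 'n kvec set)) ^ q * (A ^ q * real N powr (real q / 4) * real q powr (- B * sqrt (real N)))"
proof -
  let ?P = "PiE {..<q} (\<lambda>_. Qset N :: 'n kvec set)"
  have finP: "finite ?P" by (intro finite_PiE) auto
  have neP: "?P \<noteq> {}" using Qset_ne[OF N, where 'n='n] by (simp add: PiE_eq_empty_iff)
  have cardP: "card ?P = card (Qset N :: 'n kvec set) ^ q" by (simp add: card_PiE)
  have cpos: "real (card ?P) > 0" using finP neP by (simp add: card_gt_0_iff)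
  have "measure_pmf.prob (pmf_of_set ?P) {ks. xorsum q ks \<in> Qset N} \<le> A ^ q * real N powr (real q / 4) * real q powr (- B * sqrt (real N))"
    using xb N q unfolding xor_bound_def by blast
  moreover have "measure_pmf.prob (pmf_of_set ?P) {ks. xorsum q ks \<in> Qset N} = real (card (?P \<inter> {ks. xorsum q ks \<in> Qset N})) / real (card ?P)"
    by (rule measure_pmf_of_set[OF neP finP])
  moreover have "?P \<inter> {ks. xorsum q ks \<in> Qset N} = {ks \<in> ?P. xorsum q ks \<in> Qset N}" by auto
  ultimately have "real (card {ks \<in> ?P. xorsum q ks \<in> Qset N}) / real (card ?P) \<le> A ^ q * real N powr (real q / 4) * real q powr (- B * sqrt (real N))"
    by simp
  then show ?thesis using cpos unfolding cardP by (simp add: field_simps)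
qed


theorem theorem2:
  fixes A B :: real
  assumes "A > 0" and "B > 0"
    and "xor_bound TYPE('n::finite) A B"
  shows "\<exists>(d::real) (m0::nat). \<forall>m. m0 \<le> m \<longrightarrow> 1 \<le> m \<longrightarrow>
     (\<forall>f :: real^'n \<Rightarrow> real. Cinf_on (cbox 0 One) f \<longrightarrow>
        (let c = c_const TYPE('n) B; N = Nm TYPE('n) c m in
         dTV (map_pmf (SUM1 f N m) (Omega N m)) (map_pmf (SUM1' f N m) (Omega N m))
           \<le> 1 / (c * real m) + real m powr d * 2 powr (- 4 * c * real m)))"
proof -
  note Apos = assms(1) and Bpos = assms(2) and xb = assms(3)
  define s where "s = real CARD('n)"
  define lam where "lam = lambda_const"
  define c where "c = c_const TYPE('n) B"
  have s: "s > 0" by (simp add: s_def)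
  have lam: "lam > 0" by (simp add: lam_def lambda_const_def)
  have cdef: "c = B / 4 * sqrt (lam / s)" by (simp add: c_def c_const_def lam_def s_def)
  have c: "c > 0" using Bpos lam s by (simp add: cdef)
  have c2: "16 * c^2 = B^2 * lam / s"
    using lam s by (simp add: cdef power_mult_distrib power_divide)
  define K where "K = max 1 (c * A * sqrt 2)"
  have K: "K \<ge> 1" by (simp add: K_def)
  have Kpos: "K > 0" using K by simp
  have lams: "lam / s > 0" using lam s by simp
  have ev1: "eventually (\<lambda>m::nat. c * real m \<ge> 1) sequentially" using c by real_asymp
  have ev2: "eventually (\<lambda>m::nat. c * real m + 1 < 2 powr real m) sequentially" using c by real_asymp
  have ev3: "eventually (\<lambda>m::nat. lam / s * (real m)^2 \<ge> 2) sequentially" using lams by real_asymp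
  have ev4: "eventually (\<lambda>m::nat. 8 * c * real m \<ge> B^2 + 1) sequentially" using c by real_asymp
  have ev5: "eventually (\<lambda>m::nat. 2 * sqrt K * real m powr (3/4) * ln (K * real m powr (3/2)) \<le> 4 * c * real m * ln (3/2)) sequentially"
    using c K by real_asymp
  have ev6: "eventually (\<lambda>m::nat. 4 * c * real m * (K^2 * real m ^ 3 + c * real m) \<le> real m ^ 5) sequentially"
    using c Kpos by real_asymp
  have "eventually (\<lambda>m::nat. c * real m \<ge> 1 \<and> c * real m + 1 < 2 powr real m \<and> lam / s * (real m)^2 \<ge> 2 \<and>
      8 * c * real m \<ge> B^2 + 1 \<and> 2 * sqrt K * real m powr (3/4) * ln (K * real m powr (3/2)) \<le> 4 * c * real m * ln (3/2) \<and>
      4 * c * real m * (K^2 * real m ^ 3 + c * real m) \<le> real m ^ 5) sequentially"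
    by (intro eventually_conj ev1 ev2 ev3 ev4 ev5 ev6)
  then obtain m0 where H: "\<And>m. m \<ge> m0 \<Longrightarrow> c * real m \<ge> 1 \<and> c * real m + 1 < 2 powr real m \<and> lam / s * (real m)^2 \<ge> 2 \<and>
      8 * c * real m \<ge> B^2 + 1 \<and> 2 * sqrt K * real m powr (3/4) * ln (K * real m powr (3/2)) \<le> 4 * c * real m * ln (3/2) \<and>
      4 * c * real m * (K^2 * real m ^ 3 + c * real m) \<le> real m ^ 5"
    unfolding eventually_sequentially by blast
  show ?thesis
  proof (intro exI[of _ "5::real"] exI[of _ m0] allI impI)
    fix m :: nat and f :: "real^'n \<Rightarrow> real"
    assume mm0: "m0 \<le> m" and m1: "1 \<le> m" and "Cinf_on (cbox 0 One) f"
    have E1: "c * real m \<ge> 1" and E2': "c * real m + 1 < 2 powr real m" and E3: "lam / s * (real m)^2 \<ge> 2"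
      and E4: "8 * c * real m \<ge> B^2 + 1"
      and E5: "2 * sqrt K * real m powr (3/4) * ln (K * real m powr (3/2)) \<le> 4 * c * real m * ln (3/2)"
      and E6: "4 * c * real m * (K^2 * real m ^ 3 + c * real m) \<le> real m ^ 5"
      using H[OF mm0] by auto
    have E2: "c * real m + 1 < 2 ^ m" using E2' by (simp add: powr_realpow)
    have mr: "real m \<ge> 1" using m1 by simp
    define N where "N = Nm TYPE('n) c m"
    let ?Q = "Qset N :: 'n kvec set"
    let ?CS = "Cspace N m :: 'n cmat set"
    have cardQ: "real (card ?Q) \<le> c * real m * 2 ^ m" unfolding N_def by (rule Nm_props(1)[OF c E2])
    have N4: "N < (2 * m) * (2 * m)" unfolding N_def by (rule Nm_props(2)[OF c E2])
    have E3': "lambda_const * (real m)^2 / real CARD('n) \<ge> 1" using E3 by (simp add: lam_def s_def field_simps)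
    have Nlow: "real N \<ge> lam * (real m)^2 / s - 1"
      unfolding N_def lam_def s_def by (rule Nm_lower[OF c E2 E1 E3'])
    have N1r: "real N \<ge> 1" using Nlow E3 by (simp add: field_simps)
    then have N1: "N \<ge> 1" by simp
    define a where "a = c * real m"
    have a: "a > 0" using c m1 by (simp add: a_def)
    have mu: "real (card ?Q) / 2 ^ m \<le> a" using cardQ by (simp add: a_def field_simps)
    define M where "M = nat \<lfloor>2 * a\<rfloor>"
    have bad: "real (card {C \<in> ?CS. \<not> indep (Kset N m C)})
       \<le> real (card ?CS) / a + real (card ?CS) * (\<Sum>q\<in>{2..M}. real (card (Tq N q :: 'n kvec set set)) / 2 ^ (q * m))"
      unfolding M_def by (rule bad_count[OF a mu])
    define y where "y = B * sqrt (real N)"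
    have y: "y \<ge> 4 * c * real m - 1"
    proof -
      have "B^2 * real N \<ge> B^2 * (lam * (real m)^2 / s - 1)" using Nlow by (intro mult_left_mono) auto
      also have "B^2 * (lam * (real m)^2 / s - 1) = 16 * c^2 * (real m)^2 - B^2" using c2 s by (simp add: field_simps)
      finally have "B^2 * real N \<ge> (4 * c * real m - 1)^2" using E4 by (simp add: power2_eq_square algebra_simps)
      then have "sqrt ((4 * c * real m - 1)^2) \<le> sqrt (B^2 * real N)" by (rule real_sqrt_le_mono)
      moreover have "sqrt (B^2 * real N) = y" using Bpos by (simp add: y_def real_sqrt_mult)
      moreover have "4 * c * real m - 1 \<le> sqrt ((4 * c * real m - 1)^2)" by simp
      ultimately show ?thesis by linarith
    qed
    define x where "x = c * real m * A * real N powr (1/4)"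
    have x0: "0 \<le> x" using c Apos by (simp add: x_def)
    have xK: "x \<le> K * real m powr (3/2)"
    proof -
      have "N \<le> 4 * m * m" using N4 by simp
      then have "real N \<le> real (4 * m * m)" by (simp only: of_nat_le_iff)
      then have N4r: "real N \<le> 4 * (real m)^2" by (simp add: power2_eq_square)
      have "real N powr (1/4) \<le> (4 * (real m)^2) powr (1/4)"
        using N4r by (intro powr_mono2) auto
      also have "(4 * (real m)^2) powr (1/4) = sqrt 2 * real m powr (1/2)"
      proof -
        have "(4 * (real m)^2) powr (1/4) = 4 powr (1/4) * ((real m)^2) powr (1/4)" by (simp add: powr_mult)
        also have "(4::real) powr (1/4) = sqrt 2"
        proof -
          have e: "(2::real) powr 2 = 4" by simp
          have "(4::real) powr (1/4) = ((2::real) powr 2) powr (1/4)" by (simp only: e)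
          also have "\<dots> = 2 powr (2 * (1/4))" by (rule powr_powr)
          also have "\<dots> = 2 powr (1/2)" by simp
          also have "\<dots> = sqrt 2" by (simp add: powr_half_sqrt)
          finally show ?thesis .
        qed
        also have "((real m)^2) powr (1/4) = real m powr (1/2)"
        proof -
          have mpos: "real m > 0" using mr by simp
          then show ?thesis by (simp add: powr_def ln_realpow)
        qed
        finally show ?thesis .
      qed
      finally have Nq: "real N powr (1/4) \<le> sqrt 2 * real m powr (1/2)" .
      have "x \<le> c * real m * A * (sqrt 2 * real m powr (1/2))"
        unfolding x_def using Nq c Apos m1 by (intro mult_left_mono) auto
      also have "\<dots> = (c * A * sqrt 2) * (real m * real m powr (1/2))" by (simp add: algebra_simps)
      also have "real m * real m powr (1/2) = real m powr (3/2)"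
      proof -
        have "real m * real m powr (1/2) = real m powr 1 * real m powr (1/2)" using mr by simp
        also have "\<dots> = real m powr (1 + 1/2)" by (rule powr_add[symmetric])
        finally show ?thesis by simp
      qed
      also have "(c * A * sqrt 2) * real m powr (3/2) \<le> K * real m powr (3/2)"
        by (intro mult_right_mono) (auto simp: K_def)
      finally show ?thesis .
    qed
    have tb: "real (card (Tq N q :: 'n kvec set set)) / 2 ^ (q * m) \<le> 2 * (K^2 * (real m)^3 + c * real m) * 2 powr (- 4 * c * real m)"
      if q: "q \<in> {2..M}" for q
    proof -
      have q2: "2 \<le> q" using q by simp
      have fl: "\<lfloor>2 * a\<rfloor> \<ge> 0" using a by simp
      have "real q \<le> real (nat \<lfloor>2 * a\<rfloor>)" using q unfolding M_def by simp
      also have "\<dots> = real_of_int \<lfloor>2 * a\<rfloor>" using fl by simp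
      also have "\<dots> \<le> 2 * a" by (rule of_int_floor_le)
      finally have qc: "real q \<le> 2 * c * real m" by (simp add: a_def)
      have "real (card (Tq N q :: 'n kvec set set)) \<le> real (card {ks \<in> PiE {..<q} (\<lambda>_. ?Q). xorsum q ks \<in> ?Q})"
        by (simp add: card_Tq_le)
      also have "\<dots> \<le> real (card ?Q) ^ q * (A ^ q * real N powr (real q / 4) * real q powr (- B * sqrt (real N)))"
        by (rule Xq_bound[OF xb N1 q2])
      finally have 0: "real (card (Tq N q :: 'n kvec set set)) \<le> real (card ?Q) ^ q * (A ^ q * real N powr (real q / 4) * real q powr (- B * sqrt (real N)))" .
      have e: "(2::real) ^ (q * m) = (2 ^ m) ^ q" by (simp only: power_mult[symmetric] mult.commute)
      have e2: "(real (card ?Q) / 2 ^ m) ^ q * (A ^ q * real N powr (real q / 4) * real q powr (- B * sqrt (real N)))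
          = real (card ?Q) ^ q * (A ^ q * real N powr (real q / 4) * real q powr (- B * sqrt (real N))) / (2 ^ m) ^ q"
        by (simp only: power_divide times_divide_eq_left)
      have 1: "real (card (Tq N q :: 'n kvec set set)) / 2 ^ (q * m) \<le>
          (real (card ?Q) / 2 ^ m) ^ q * (A ^ q * real N powr (real q / 4) * real q powr (- B * sqrt (real N)))"
        unfolding e e2 by (rule divide_right_mono[OF 0]) simp
      note 1
      also have "\<dots> \<le> (c * real m) ^ q * (A ^ q * real N powr (real q / 4) * real q powr (- B * sqrt (real N)))"
        using mu Apos by (intro mult_right_mono power_mono) (auto simp: a_def)
      also have "\<dots> = x ^ q * real q powr (- y)"
      proof -
        have "real N powr (real q / 4) = (real N powr (1/4)) ^ q"
          using N1r by (simp add: powr_realpow[symmetric] powr_powr)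
        then show ?thesis by (simp add: x_def y_def power_mult_distrib)
      qed
      also have "\<dots> \<le> 2 * (K^2 * (real m)^3 + c * real m) * 2 powr (- 4 * c * real m)"
        by (rule term_bound[OF c K mr x0 xK y q2 qc E5])
      finally show ?thesis .
    qed
    have sumb: "(\<Sum>q\<in>{2..M}. real (card (Tq N q :: 'n kvec set set)) / 2 ^ (q * m)) \<le> real m ^ 5 * 2 powr (- 4 * c * real m)"
    proof -
      have "(\<Sum>q\<in>{2..M}. real (card (Tq N q :: 'n kvec set set)) / 2 ^ (q * m))
          \<le> real (card {2..M}) * (2 * (K^2 * (real m)^3 + c * real m) * 2 powr (- 4 * c * real m))"
        using tb by (rule sum_bounded_above)
      also have "real (card {2..M}) \<le> 2 * c * real m"
      proof -
        have "card {2..M} \<le> M" by simp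
        moreover have "real M \<le> 2 * a"
        proof -
          have fl: "\<lfloor>2 * a\<rfloor> \<ge> 0" using a by simp
          have "real M = real_of_int \<lfloor>2 * a\<rfloor>" using fl unfolding M_def by simp
          also have "\<dots> \<le> 2 * a" by (rule of_int_floor_le)
          finally show ?thesis .
        qed
        ultimately show ?thesis by (simp add: a_def)
      qed
      then have "real (card {2..M}) * (2 * (K^2 * (real m)^3 + c * real m) * 2 powr (- 4 * c * real m))
          \<le> 2 * c * real m * (2 * (K^2 * (real m)^3 + c * real m) * 2 powr (- 4 * c * real m))"
        using c m1 by (intro mult_right_mono) auto
      also have "\<dots> = (4 * c * real m * (K^2 * real m ^ 3 + c * real m)) * 2 powr (- 4 * c * real m)"
        by (simp add: algebra_simps)
      also have "\<dots> \<le> real m ^ 5 * 2 powr (- 4 * c * real m)"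
        using E6 by (intro mult_right_mono) auto
      finally show ?thesis .
    qed
    have csp: "real (card ?CS) > 0"
      using finite_Cspace Cspace_ne by (metis card_gt_0_iff empty_iff of_nat_0_less_iff)
    have pbad: "real (card (badset N m :: 'n cmat set)) / real (card ?CS) \<le> 1 / (c * real m) + real m ^ 5 * 2 powr (- 4 * c * real m)"
    proof -
      have "real (card ?CS) * (\<Sum>q\<in>{2..M}. real (card (Tq N q :: 'n kvec set set)) / 2 ^ (q * m))
          \<le> real (card ?CS) * (real m ^ 5 * 2 powr (- 4 * c * real m))"
        using sumb csp by (intro mult_left_mono) auto
      then have "real (card (badset N m :: 'n cmat set)) \<le> real (card ?CS) / a + real (card ?CS) * (real m ^ 5 * 2 powr (- 4 * c * real m))"
        using bad unfolding badset_def by linarith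
      then have "real (card (badset N m :: 'n cmat set)) / real (card ?CS) \<le> (real (card ?CS) / a + real (card ?CS) * (real m ^ 5 * 2 powr (- 4 * c * real m))) / real (card ?CS)"
        using csp by (intro divide_right_mono) auto
      also have "\<dots> = 1 / a + real m ^ 5 * 2 powr (- 4 * c * real m)"
        using csp by (simp add: add_divide_distrib)
      finally show ?thesis by (simp add: a_def)
    qed
    have "dTV (map_pmf (SUM1 f N m) (Omega N m)) (map_pmf (SUM1' f N m) (Omega N m))
        \<le> 1 / (c * real m) + real m ^ 5 * 2 powr (- 4 * c * real m)"
      unfolding dTV_def
    proof (rule cSUP_least)
      show "sets borel \<noteq> {}" by auto
      fix X :: "real set" assume "X \<in> sets borel"
      show "\<bar>measure_pmf.prob (map_pmf (SUM1 f N m) (Omega N m)) X - measure_pmf.prob (map_pmf (SUM1' f N m) (Omega N m)) X\<bar>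
          \<le> 1 / (c * real m) + real m ^ 5 * 2 powr (- 4 * c * real m)"
        using prob_diff[of f N m X] pbad by linarith
    qed
    moreover have "real m powr (5::real) = real m ^ 5" using mr by simp
    ultimately show "let c = c_const TYPE('n) B; N = Nm TYPE('n) c m in
         dTV (map_pmf (SUM1 f N m) (Omega N m)) (map_pmf (SUM1' f N m) (Omega N m))
           \<le> 1 / (c * real m) + real m powr 5 * 2 powr (- 4 * c * real m)"
      unfolding Let_def c_def[symmetric] N_def[symmetric] by simp
  qed
qed


end
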